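(* Let $(X,\rho)$ be a complete separable metric space satisfying the strict triangle inequality $\rho(x,y)<\rho(x,z)+\rho(z,y)$ for all $x,y,z\in X$ with $z\notin\{x,y\}$. If $\Phi\colon\mathcal{W}_1(X)\to\mathcal{W}_1(X)$ is an isometry (distance preserving bijection), then there exists an isometry $\psi$ of $X$ such that $\Phi(\mu)=\psi_\#\mu$ for all $\mu\in\mathcal{W}_1(X)$.
   Context: $\mathcal{W}_1(X)$ is the set of Borel probability measures $\mu$ on $X$ with $\int_X\rho(x,\hat x)\,d\mu(x)<\infty$ for some $\hat x\in X$, with $d_{\mathcal{W}_1}(\mu,\nu)=\inf_{\pi\in\Pi(\mu,\nu)}\int_{X\times X}\rho(x,y)\,d\pi(x,y)$, $\Pi(\mu,\nu)$ being the set of Borel probability measures on $X\times X$ with marginals $\mu,\nu$. The push-forward is $(g_\#\mu)(A)=\mu(g^{-1}[A])$. *)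

theory Defs
  imports "HOL-Probability.Probability"
begin

text \<open>The metric space (X, rho) is the type 'a with its metric dist; complete separable
  is the class polish_space (complete + second countable, i.e. separable for metric spaces).\<close>

definition W1 :: "('a::metric_space) measure set" where
  "W1 = {\<mu>. sets \<mu> = sets (borel :: 'a measure) \<and> prob_space \<mu> \<and>
              (\<exists>x0. (\<integral>\<^sup>+ x. ennreal (dist x x0) \<partial>\<mu>) < \<infinity>)}"

definition couplings :: "('a::metric_space) measure \<Rightarrow> 'a measure \<Rightarrow> ('a \<times> 'a) measure set" where
  "couplings \<mu> \<nu> = {\<pi>. sets \<pi> = sets (borel :: ('a \<times> 'a) measure) \<and> prob_space \<pi> \<and>
        distr \<pi> borel fst = \<mu> \<and> distr \<pi> borel snd = \<nu>}"

definition W1_dist :: "('a::metric_space) measure \<Rightarrow> 'a measure \<Rightarrow> ennreal" where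
  "W1_dist \<mu> \<nu> = (INF \<pi>\<in>couplings \<mu> \<nu>. \<integral>\<^sup>+ p. ennreal (dist (fst p) (snd p)) \<partial>\<pi>)"

definition W1_isometry :: "(('a::metric_space) measure \<Rightarrow> 'a measure) \<Rightarrow> bool" where
  "W1_isometry \<Phi> \<longleftrightarrow> bij_betw \<Phi> W1 W1 \<and>
     (\<forall>\<mu>\<in>W1. \<forall>\<nu>\<in>W1. W1_dist (\<Phi> \<mu>) (\<Phi> \<nu>) = W1_dist \<mu> \<nu>)"

definition isometry :: "(('a::metric_space) \<Rightarrow> 'a) \<Rightarrow> bool" where
  "isometry \<psi> \<longleftrightarrow> bij \<psi> \<and> (\<forall>x y. dist (\<psi> x) (\<psi> y) = dist x y)"

end

theory Submission
  imports Defs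
begin

lemma W1_D:
  assumes "\<mu> \<in> W1"
  shows "sets \<mu> = sets borel" "prob_space \<mu>" "space \<mu> = UNIV"
  using assms unfolding W1_def by (auto dest: sets_eq_imp_space_eq)

lemma meas_cong_borel:
  "sets M = sets borel \<Longrightarrow> f \<in> borel_measurable borel \<Longrightarrow> f \<in> borel_measurable M"
  using measurable_cong_sets[of M borel borel borel] by simp

lemma meas_cong_borel2:
  fixes f :: "('a::second_countable_topology \<times> 'a) \<Rightarrow> 'b::topological_space"
  shows "sets M = sets (borel :: ('a \<times> 'a) measure) \<Longrightarrow> f \<in> borel_measurable (borel \<Otimes>\<^sub>M borel) \<Longrightarrow> f \<in> borel_measurable M"
  using measurable_cong_sets[of M "borel \<Otimes>\<^sub>M borel" borel borel] by (metis borel_prod)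

lemma W1_nn_moment:
  fixes \<mu> :: "'a::polish_space measure"
  assumes "\<mu> \<in> W1" shows "(\<integral>\<^sup>+x. ennreal (dist x y) \<partial>\<mu>) < \<infinity>"
proof -
  obtain x0 where x0: "(\<integral>\<^sup>+x. ennreal (dist x x0) \<partial>\<mu>) < \<infinity>" using assms unfolding W1_def by auto
  have ps: "prob_space \<mu>" and s: "sets \<mu> = sets borel" using W1_D[OF assms] by auto
  have m1: "(\<lambda>x. ennreal (dist x x0)) \<in> borel_measurable \<mu>"
    by (rule meas_cong_borel[OF s]) measurable
  have "(\<integral>\<^sup>+x. ennreal (dist x y) \<partial>\<mu>) \<le> (\<integral>\<^sup>+x. ennreal (dist x x0) + ennreal (dist x0 y) \<partial>\<mu>)"
    by (intro nn_integral_mono) (simp add: ennreal_plus[symmetric] del: ennreal_plus add: dist_triangle)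
  also have "\<dots> = (\<integral>\<^sup>+x. ennreal (dist x x0) \<partial>\<mu>) + ennreal (dist x0 y)"
    using m1 prob_space.emeasure_space_1[OF ps] by (simp add: nn_integral_add)
  also have "\<dots> < \<infinity>" using x0 by simp
  finally show ?thesis .
qed

lemma W1_int:
  fixes \<mu> :: "'a::polish_space measure"
  assumes "\<mu> \<in> W1" shows "integrable \<mu> (\<lambda>x. dist x y)" "integrable \<mu> (\<lambda>x. dist y x)"
proof -
  have s: "sets \<mu> = sets borel" using W1_D[OF assms] by auto
  show "integrable \<mu> (\<lambda>x. dist x y)"
  proof (rule integrableI_bounded)
    show "(\<lambda>x. dist x y) \<in> borel_measurable \<mu>" by (rule meas_cong_borel[OF s]) measurable
    show "(\<integral>\<^sup>+ x. ennreal (norm (dist x y)) \<partial>\<mu>) < \<infinity>" using W1_nn_moment[OF assms, of y] by simp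
  qed
  then show "integrable \<mu> (\<lambda>x. dist y x)" by (simp add: dist_commute)
qed

lemma W1_nn_eq:
  fixes \<mu> :: "'a::polish_space measure"
  assumes "\<mu> \<in> W1"
  shows "(\<integral>\<^sup>+x. ennreal (dist y x) \<partial>\<mu>) = ennreal (\<integral>x. dist y x \<partial>\<mu>)"
  by (rule nn_integral_eq_integral) (auto simp: W1_int[OF assms])

lemma coupD:
  assumes "\<pi> \<in> couplings \<mu> \<nu>"
  shows "sets \<pi> = sets borel" "prob_space \<pi>" "distr \<pi> borel fst = \<mu>" "distr \<pi> borel snd = \<nu>"
    "space \<pi> = UNIV"
  using assms unfolding couplings_def by (auto dest: sets_eq_imp_space_eq)

lemma coup_meas:
  fixes \<pi> :: "('a::polish_space \<times> 'a) measure"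
  assumes "\<pi> \<in> couplings \<mu> \<nu>"
  shows "fst \<in> measurable \<pi> borel" "snd \<in> measurable \<pi> borel"
proof -
  have s: "sets \<pi> = sets (borel \<Otimes>\<^sub>M borel)" using coupD(1)[OF assms] by (metis borel_prod)
  show "fst \<in> measurable \<pi> borel" unfolding measurable_cong_sets[OF s refl] by (rule measurable_fst)
  show "snd \<in> measurable \<pi> borel" unfolding measurable_cong_sets[OF s refl] by (rule measurable_snd)
qed

lemma coup_nn_fst:
  fixes f :: "'a::polish_space \<Rightarrow> ennreal"
  assumes "\<pi> \<in> couplings \<mu> \<nu>" "f \<in> borel_measurable borel"
  shows "(\<integral>\<^sup>+p. f (fst p) \<partial>\<pi>) = (\<integral>\<^sup>+x. f x \<partial>\<mu>)"
proof -
  have "f \<in> borel_measurable (distr \<pi> borel fst)" using assms(2) by simp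
  from nn_integral_distr[OF coup_meas(1)[OF assms(1)] this] coupD(3)[OF assms(1)] show ?thesis by simp
qed

lemma coup_nn_snd:
  fixes f :: "'a::polish_space \<Rightarrow> ennreal"
  assumes "\<pi> \<in> couplings \<mu> \<nu>" "f \<in> borel_measurable borel"
  shows "(\<integral>\<^sup>+p. f (snd p) \<partial>\<pi>) = (\<integral>\<^sup>+x. f x \<partial>\<nu>)"
proof -
  have "f \<in> borel_measurable (distr \<pi> borel snd)" using assms(2) by simp
  from nn_integral_distr[OF coup_meas(2)[OF assms(1)] this] coupD(4)[OF assms(1)] show ?thesis by simp
qed

lemma coup_int_fst:
  fixes f :: "'a::polish_space \<Rightarrow> real"
  assumes "\<pi> \<in> couplings \<mu> \<nu>" "f \<in> borel_measurable borel"
  shows "(\<integral>p. f (fst p) \<partial>\<pi>) = (\<integral>x. f x \<partial>\<mu>)"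
    "integrable \<pi> (\<lambda>p. f (fst p)) \<longleftrightarrow> integrable \<mu> f"
  using integral_distr[OF coup_meas(1)[OF assms(1)] assms(2)]
    integrable_distr_eq[OF coup_meas(1)[OF assms(1)] assms(2)] coupD(3)[OF assms(1)] by simp_all

lemma coup_int_snd:
  fixes f :: "'a::polish_space \<Rightarrow> real"
  assumes "\<pi> \<in> couplings \<mu> \<nu>" "f \<in> borel_measurable borel"
  shows "(\<integral>p. f (snd p) \<partial>\<pi>) = (\<integral>x. f x \<partial>\<nu>)"
    "integrable \<pi> (\<lambda>p. f (snd p)) \<longleftrightarrow> integrable \<nu> f"
  using integral_distr[OF coup_meas(2)[OF assms(1)] assms(2)]
    integrable_distr_eq[OF coup_meas(2)[OF assms(1)] assms(2)] coupD(4)[OF assms(1)] by simp_all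

lemma coup_cost_meas:
  fixes \<pi> :: "('a::polish_space \<times> 'a) measure"
  assumes "\<pi> \<in> couplings \<mu> \<nu>"
  shows "(\<lambda>p. dist (fst p) (snd p)) \<in> borel_measurable \<pi>"
  using coup_meas[OF assms] by measurable

lemma coup_cost_int:
  fixes \<pi> :: "('a::polish_space \<times> 'a) measure"
  assumes "\<pi> \<in> couplings \<mu> \<nu>" "\<mu> \<in> W1" "\<nu> \<in> W1"
  shows "integrable \<pi> (\<lambda>p. dist (fst p) (snd p))"
proof -
  fix y :: 'a
  have i1: "integrable \<pi> (\<lambda>p. dist (fst p) y)"
    using coup_int_fst(2)[OF assms(1), of "\<lambda>x. dist x y"] W1_int[OF assms(2)] by simp
  have i2: "integrable \<pi> (\<lambda>p. dist y (snd p))"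
    using coup_int_snd(2)[OF assms(1), of "\<lambda>x. dist y x"] W1_int[OF assms(3)] by simp
  show ?thesis
    by (rule Bochner_Integration.integrable_bound[OF Bochner_Integration.integrable_add[OF i1 i2] coup_cost_meas[OF assms(1)]])
       (auto intro: dist_triangle)
qed

lemma coup_cost_nn:
  fixes \<pi> :: "('a::polish_space \<times> 'a) measure"
  assumes "\<pi> \<in> couplings \<mu> \<nu>" "\<mu> \<in> W1" "\<nu> \<in> W1"
  shows "(\<integral>\<^sup>+p. ennreal (dist (fst p) (snd p)) \<partial>\<pi>) = ennreal (\<integral>p. dist (fst p) (snd p) \<partial>\<pi>)"
  by (rule nn_integral_eq_integral) (auto simp: coup_cost_int[OF assms])

lemma W1_dist_le:
  "\<pi> \<in> couplings \<mu> \<nu> \<Longrightarrow> W1_dist \<mu> \<nu> \<le> (\<integral>\<^sup>+p. ennreal (dist (fst p) (snd p)) \<partial>\<pi>)"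
  unfolding W1_dist_def by (rule INF_lower)

lemma prod_coupling:
  fixes \<mu> :: "'a::polish_space measure"
  assumes "\<mu> \<in> W1" "\<nu> \<in> W1"
  shows "\<mu> \<Otimes>\<^sub>M \<nu> \<in> couplings \<mu> \<nu>"
proof -
  have s1: "sets \<mu> = sets borel" and p1: "prob_space \<mu>" using W1_D[OF assms(1)] by auto
  have s2: "sets \<nu> = sets borel" and p2: "prob_space \<nu>" using W1_D[OF assms(2)] by auto
  have sp: "sets (\<mu> \<Otimes>\<^sub>M \<nu>) = sets (borel::('a\<times>'a) measure)"
    using sets_pair_measure_cong[OF s1 s2] by (metis borel_prod)
  have "distr (\<mu> \<Otimes>\<^sub>M \<nu>) borel fst = distr (\<mu> \<Otimes>\<^sub>M \<nu>) \<mu> fst"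
    by (rule distr_cong) (auto simp: s1)
  also have "\<dots> = \<mu>" using prob_space.distr_pair_fst[OF p2] .
  finally have f: "distr (\<mu> \<Otimes>\<^sub>M \<nu>) borel fst = \<mu>" .
  have sn: "distr (\<mu> \<Otimes>\<^sub>M \<nu>) borel snd = \<nu>"
  proof (rule measure_eqI)
    show "sets (distr (\<mu> \<Otimes>\<^sub>M \<nu>) borel snd) = sets \<nu>" using s2 by simp
    fix A assume A: "A \<in> sets (distr (\<mu> \<Otimes>\<^sub>M \<nu>) borel snd)"
    then have A': "A \<in> sets \<nu>" using s2 by simp
    have "snd -` A \<inter> space (\<mu> \<Otimes>\<^sub>M \<nu>) = space \<mu> \<times> A"
      using sets.sets_into_space[OF A'] by (auto simp: space_pair_measure W1_D[OF assms(1)] W1_D[OF assms(2)])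
    moreover have "snd \<in> measurable (\<mu> \<Otimes>\<^sub>M \<nu>) borel"
      using measurable_snd[of \<mu> \<nu>] measurable_cong_sets[OF refl s2, of "\<mu> \<Otimes>\<^sub>M \<nu>"] by simp
    ultimately show "emeasure (distr (\<mu> \<Otimes>\<^sub>M \<nu>) borel snd) A = emeasure \<nu> A"
      using A A' p1 p2
      by (simp add: emeasure_distr prob_space_imp_sigma_finite sigma_finite_measure.emeasure_pair_measure_Times
            prob_space.emeasure_space_1)
  qed
  show ?thesis unfolding couplings_def using sp f sn prob_space_pair[OF p1 p2] by auto
qed

lemma couplings_nonempty:
  fixes \<mu> :: "'a::polish_space measure"
  assumes "\<mu> \<in> W1" "\<nu> \<in> W1" shows "couplings \<mu> \<nu> \<noteq> {}"
  using prod_coupling[OF assms] by auto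

lemma W1_dist_finite:
  fixes \<mu> :: "'a::polish_space measure"
  assumes "\<mu> \<in> W1" "\<nu> \<in> W1" shows "W1_dist \<mu> \<nu> < \<infinity>"
proof -
  have "W1_dist \<mu> \<nu> \<le> ennreal (\<integral>p. dist (fst p) (snd p) \<partial>(\<mu> \<Otimes>\<^sub>M \<nu>))"
    using W1_dist_le[OF prod_coupling[OF assms]] coup_cost_nn[OF prod_coupling[OF assms] assms] by simp
  also have "\<dots> < \<infinity>" by simp
  finally show ?thesis .
qed

lemma dirac_W1: "return borel (x::'a::polish_space) \<in> W1"
proof -
  have "(\<integral>\<^sup>+y. ennreal (dist y x) \<partial>return borel x) = 0"
    by (subst nn_integral_return) auto
  then show ?thesis unfolding W1_def by (auto intro!: prob_space_return exI[of _ x])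
qed

lemma W1_dist_dirac:
  fixes \<nu> :: "'a::polish_space measure"
  assumes "\<nu> \<in> W1"
  shows "W1_dist (return borel x) \<nu> = (\<integral>\<^sup>+y. ennreal (dist x y) \<partial>\<nu>)"
proof -
  let ?c = "\<integral>\<^sup>+y. ennreal (dist x y) \<partial>\<nu>"
  have eq: "(\<integral>\<^sup>+p. ennreal (dist (fst p) (snd p)) \<partial>\<pi>) = ?c" if \<pi>: "\<pi> \<in> couplings (return borel x) \<nu>" for \<pi>
  proof -
    have mf: "fst \<in> measurable \<pi> borel" using coup_meas[OF \<pi>] by simp
    have ox: "-{x} \<in> sets borel" by (intro borel_open) auto
    let ?N = "fst -` (-{x}) \<inter> space \<pi>"
    have "emeasure \<pi> ?N = emeasure (distr \<pi> borel fst) (-{x})"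
      by (rule emeasure_distr[symmetric, OF mf ox])
    also have "\<dots> = 0" using coupD(3)[OF \<pi>] ox by simp
    finally have N0: "emeasure \<pi> ?N = 0" .
    have Ns: "?N \<in> sets \<pi>" using measurable_sets[OF mf ox] .
    have "AE p in \<pi>. fst p = x"
      by (rule AE_I'[of ?N]) (use N0 Ns in auto)
    then have "AE p in \<pi>. ennreal (dist (fst p) (snd p)) = ennreal (dist x (snd p))"
      by eventually_elim auto
    then have "(\<integral>\<^sup>+p. ennreal (dist (fst p) (snd p)) \<partial>\<pi>) = (\<integral>\<^sup>+p. ennreal (dist x (snd p)) \<partial>\<pi>)"
      by (rule nn_integral_cong_AE)
    also have "\<dots> = ?c" by (rule coup_nn_snd[OF \<pi>]) measurable
    finally show ?thesis .
  qed
  have "W1_dist (return borel x) \<nu> = (INF \<pi>\<in>couplings (return borel x) \<nu>. ?c)"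
    unfolding W1_dist_def by (rule INF_cong) (auto simp: eq)
  also have "\<dots> = ?c" using couplings_nonempty[OF dirac_W1 assms] by simp
  finally show ?thesis .
qed

lemma dirac_eq:
  fixes M :: "'a::polish_space measure"
  assumes "prob_space M" "sets M = sets borel" "emeasure M {x} = 1"
  shows "M = return borel x"
proof (rule measure_eqI)
  show "sets M = sets (return borel x)" using assms by simp
  have sp: "space M = UNIV" using sets_eq_imp_space_eq[OF assms(2)] by simp
  have xs: "{x} \<in> sets M" using assms(2) by simp
  fix A assume A: "A \<in> sets M"
  show "emeasure M A = emeasure (return borel x) A"
  proof (cases "x \<in> A")
    case True
    have "1 \<le> emeasure M A" using emeasure_mono[of "{x}" A M] A True assms(3) by auto
    moreover have "emeasure M A \<le> 1" using prob_space.emeasure_le_1[OF assms(1)] by simp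
    ultimately show ?thesis using True A assms(2) by simp
  next
    case False
    have xs': "space M - {x} \<in> sets M" using xs by auto
    have "emeasure M (space M - {x}) = emeasure M (space M) - emeasure M {x}"
      by (rule emeasure_compl[OF xs]) (simp add: assms(3))

    also have "\<dots> = 0" using prob_space.emeasure_space_1[OF assms(1)] assms(3) by simp
    finally have "emeasure M (space M - {x}) = 0" .
    moreover have "emeasure M A \<le> emeasure M (space M - {x})"
      by (rule emeasure_mono) (use False A sets.sets_into_space[OF A] xs' in auto)
    ultimately show ?thesis using False A assms(2) by simp
  qed
qed

lemma dirac_inj: "return borel (x::'a::polish_space) = return borel y \<Longrightarrow> x = y"
proof -
  assume "return borel x = return borel y"
  then have "emeasure (return borel x) {x} = emeasure (return borel y) {x}" by simp
  then show "x = y" by (auto simp: indicator_def split: if_splits)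
qed

lemma swap_coupling:
  fixes \<pi> :: "('a::polish_space \<times> 'a) measure"
  assumes \<pi>: "\<pi> \<in> couplings \<mu> \<nu>"
  shows "distr \<pi> borel prod.swap \<in> couplings \<nu> \<mu>"
    "(\<integral>\<^sup>+p. ennreal (dist (fst p) (snd p)) \<partial>distr \<pi> borel prod.swap) = (\<integral>\<^sup>+p. ennreal (dist (fst p) (snd p)) \<partial>\<pi>)"
proof -
  have ms: "prod.swap \<in> measurable \<pi> borel"
    by (rule meas_cong_borel[OF coupD(1)[OF \<pi>]]) (intro borel_measurable_continuous_onI continuous_on_swap)
  have mf1: "fst \<in> measurable (borel::('a\<times>'a) measure) borel"
    by (metis borel_prod measurable_fst)
  have mf2: "snd \<in> measurable (borel::('a\<times>'a) measure) borel"
    using measurable_snd[of "borel::'a measure" "borel::'a measure"] by (subst (asm) borel_prod)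
  note mf = mf1 mf2
  have "distr (distr \<pi> borel prod.swap) borel fst = distr \<pi> borel (fst \<circ> prod.swap)"
    by (rule distr_distr[OF mf(1) ms])
  also have "\<dots> = \<nu>" using coupD(4)[OF \<pi>] by (simp add: comp_def)
  finally have f: "distr (distr \<pi> borel prod.swap) borel fst = \<nu>" .
  have "distr (distr \<pi> borel prod.swap) borel snd = distr \<pi> borel (snd \<circ> prod.swap)"
    by (rule distr_distr[OF mf(2) ms])
  also have "\<dots> = \<mu>" using coupD(3)[OF \<pi>] by (simp add: comp_def)
  finally have s: "distr (distr \<pi> borel prod.swap) borel snd = \<mu>" .
  show "distr \<pi> borel prod.swap \<in> couplings \<nu> \<mu>"
    unfolding couplings_def using f s prob_space.prob_space_distr[OF coupD(2)[OF \<pi>] ms] by auto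
  have "(\<lambda>p::'a\<times>'a. ennreal (dist (fst p) (snd p))) \<in> borel_measurable borel"
    by (rule meas_cong_borel2[OF refl]) measurable
  then show "(\<integral>\<^sup>+p. ennreal (dist (fst p) (snd p)) \<partial>distr \<pi> borel prod.swap) = (\<integral>\<^sup>+p. ennreal (dist (fst p) (snd p)) \<partial>\<pi>)"
    by (subst nn_integral_distr[OF ms]) (auto simp: dist_commute)
qed

lemma W1_dist_sym_le:
  fixes \<mu> :: "'a::polish_space measure"
  shows "W1_dist \<nu> \<mu> \<le> W1_dist \<mu> \<nu>"
  unfolding W1_dist_def[of \<mu> \<nu>]
proof (rule INF_greatest)
  fix \<pi> assume "\<pi> \<in> couplings \<mu> \<nu>"
  from W1_dist_le[OF swap_coupling(1)[OF this]] swap_coupling(2)[OF this]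
  show "W1_dist \<nu> \<mu> \<le> (\<integral>\<^sup>+p. ennreal (dist (fst p) (snd p)) \<partial>\<pi>)" by simp
qed

lemma W1_dist_sym:
  fixes \<mu> :: "'a::polish_space measure"
  shows "W1_dist \<nu> \<mu> = W1_dist \<mu> \<nu>"
  by (rule antisym) (rule W1_dist_sym_le)+

lemma lip_meas:
  fixes f :: "'a::metric_space \<Rightarrow> real"
  assumes lip: "\<And>x y. \<bar>f x - f y\<bar> \<le> dist x y"
  shows "f \<in> borel_measurable borel"
proof -
  have "lipschitz_on 1 UNIV f" by (rule lipschitz_onI) (auto simp: dist_real_def lip)
  then show ?thesis by (intro borel_measurable_continuous_onI lipschitz_on_continuous_on)
qed

lemma lip_int:
  fixes f :: "'a::polish_space \<Rightarrow> real"
  assumes "\<mu> \<in> W1" and lip: "\<And>x y. \<bar>f x - f y\<bar> \<le> dist x y"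
  shows "integrable \<mu> f"
proof -
  fix y0 :: 'a
  have ps: "prob_space \<mu>" using W1_D[OF assms(1)] by simp
  interpret prob_space \<mu> by (rule ps)
  have i: "integrable \<mu> (\<lambda>x. \<bar>f y0\<bar> + dist x y0)"
    using W1_int[OF assms(1)] by auto
  show ?thesis
  proof (rule Bochner_Integration.integrable_bound[OF i])
    show "f \<in> borel_measurable \<mu>" using meas_cong_borel[OF W1_D(1)[OF assms(1)] lip_meas[OF lip]] .
    have "\<bar>f x\<bar> \<le> \<bar>f y0\<bar> + dist x y0" for x
      using lip[of x y0] abs_triangle_ineq2[of "f x" "f y0"] by linarith
    then show "AE x in \<mu>. norm (f x) \<le> norm (\<bar>f y0\<bar> + dist x y0)"
      by (intro AE_I2) auto
  qed
qed

lemma W1_lip: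
  fixes \<mu> \<nu> :: "'a::polish_space measure" and f :: "'a \<Rightarrow> real"
  assumes "\<mu> \<in> W1" "\<nu> \<in> W1" and lip: "\<And>x y. \<bar>f x - f y\<bar> \<le> dist x y"
  shows "ennreal ((\<integral>x. f x \<partial>\<mu>) - (\<integral>x. f x \<partial>\<nu>)) \<le> W1_dist \<mu> \<nu>"
  unfolding W1_dist_def
proof (rule INF_greatest)
  fix \<pi> assume \<pi>: "\<pi> \<in> couplings \<mu> \<nu>"
  have fm: "f \<in> borel_measurable borel" by (rule lip_meas[OF lip])
  have i1: "integrable \<pi> (\<lambda>p. f (fst p))" using coup_int_fst(2)[OF \<pi> fm] lip_int[OF assms(1) lip] by simp
  have i2: "integrable \<pi> (\<lambda>p. f (snd p))" using coup_int_snd(2)[OF \<pi> fm] lip_int[OF assms(2) lip] by simp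
  have "(\<integral>x. f x \<partial>\<mu>) - (\<integral>x. f x \<partial>\<nu>) = (\<integral>p. f (fst p) - f (snd p) \<partial>\<pi>)"
    using coup_int_fst(1)[OF \<pi> fm] coup_int_snd(1)[OF \<pi> fm] Bochner_Integration.integral_diff[OF i1 i2] by simp
  also have "\<dots> \<le> (\<integral>p. dist (fst p) (snd p) \<partial>\<pi>)"
    by (rule integral_mono[OF Bochner_Integration.integrable_diff[OF i1 i2] coup_cost_int[OF \<pi> assms(1,2)]])
       (use lip in \<open>auto simp: abs_le_iff\<close>)
  finally show "ennreal ((\<integral>x. f x \<partial>\<mu>) - (\<integral>x. f x \<partial>\<nu>)) \<le> (\<integral>\<^sup>+p. ennreal (dist (fst p) (snd p)) \<partial>\<pi>)"
    using coup_cost_nn[OF \<pi> assms(1,2)] by (simp add: ennreal_leI)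
qed

lemma INF_mult_bound:
  fixes f :: "'b \<Rightarrow> ennreal"
  assumes "\<And>i. i \<in> I \<Longrightarrow> X \<le> ennreal c * f i" "I \<noteq> {}" "c \<ge> 0"
  shows "X \<le> ennreal c * (INF i\<in>I. f i)"
proof (cases "c = 0")
  case True
  then show ?thesis using assms by auto
next
  case False
  then have c: "c > 0" using assms(3) by simp
  have "X * ennreal (1/c) \<le> (INF i\<in>I. f i)"
  proof (rule INF_greatest)
    fix i assume "i \<in> I"
    then have "X * ennreal (1/c) \<le> ennreal c * f i * ennreal (1/c)"
      using assms(1) by (intro mult_right_mono) auto
    also have "\<dots> = f i * (ennreal c * ennreal (1/c))" by (simp add: ac_simps)
    also have "ennreal c * ennreal (1/c) = 1" using c by (simp add: ennreal_mult[symmetric])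
    finally show "X * ennreal (1/c) \<le> f i" by simp
  qed
  then have "ennreal c * (X * ennreal (1/c)) \<le> ennreal c * (INF i\<in>I. f i)"
    by (intro mult_left_mono) auto
  moreover have "ennreal c * (X * ennreal (1/c)) = X * (ennreal c * ennreal (1/c))" by (simp add: ac_simps)
  moreover have "ennreal c * ennreal (1/c) = 1" using c by (simp add: ennreal_mult[symmetric])
  ultimately show ?thesis by simp
qed

definition Pext :: "'a::polish_space measure \<Rightarrow> bool" where
  "Pext \<mu> \<longleftrightarrow> (\<forall>\<nu>1\<in>W1. \<forall>\<nu>2\<in>W1. W1_dist \<nu>1 \<mu> + W1_dist \<mu> \<nu>2 \<le> W1_dist \<nu>1 \<nu>2 \<longrightarrow> \<nu>1 = \<mu> \<or> \<nu>2 = \<mu>)"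

lemma compl_zero_dirac:
  fixes M :: "'a::polish_space measure"
  assumes "M \<in> W1" "emeasure M (-{x}) = 0"
  shows "M = return borel x"
proof (rule dirac_eq)
  show ps: "prob_space M" and s: "sets M = sets borel" using W1_D[OF assms(1)] by auto
  have sp: "space M = UNIV" using W1_D[OF assms(1)] by auto
  have xs: "-{x} \<in> sets M" using s by (simp add: borel_open)
  have "emeasure M (space M - (-{x})) = emeasure M (space M) - emeasure M (-{x})"
    by (rule emeasure_compl[OF xs]) (simp add: assms(2))
  then show "emeasure M {x} = 1" using assms(2) prob_space.emeasure_space_1[OF ps] sp by simp
qed

lemma W1_dist_dirac_real:
  fixes \<nu> :: "'a::polish_space measure"
  assumes "\<nu> \<in> W1"
  shows "W1_dist (return borel x) \<nu> = ennreal (\<integral>y. dist x y \<partial>\<nu>)"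
    "W1_dist \<nu> (return borel x) = ennreal (\<integral>y. dist x y \<partial>\<nu>)"
  using W1_dist_dirac[OF assms] W1_nn_eq[OF assms] W1_dist_sym by metis+

lemma dirac_Pext:
  fixes x :: "'a::polish_space"
  assumes st: "\<And>x y z::'a. z \<noteq> x \<Longrightarrow> z \<noteq> y \<Longrightarrow> dist x y < dist x z + dist z y"
  shows "Pext (return borel x)"
  unfolding Pext_def
proof (intro ballI impI)
  fix \<nu>1 \<nu>2 :: "'a measure" assume n1: "\<nu>1 \<in> W1" and n2: "\<nu>2 \<in> W1"
    and le: "W1_dist \<nu>1 (return borel x) + W1_dist (return borel x) \<nu>2 \<le> W1_dist \<nu>1 \<nu>2"
  let ?\<pi> = "\<nu>1 \<Otimes>\<^sub>M \<nu>2"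
  have \<pi>: "?\<pi> \<in> couplings \<nu>1 \<nu>2" by (rule prod_coupling[OF n1 n2])
  let ?a = "\<integral>y. dist x y \<partial>\<nu>1" and ?b = "\<integral>y. dist x y \<partial>\<nu>2"
    and ?c = "\<integral>p. dist (fst p) (snd p) \<partial>?\<pi>"
  have a0: "0 \<le> ?a" and b0: "0 \<le> ?b" and c0: "0 \<le> ?c" by (auto intro!: integral_nonneg)
  have "ennreal ?a + ennreal ?b = W1_dist \<nu>1 (return borel x) + W1_dist (return borel x) \<nu>2"
    using W1_dist_dirac_real(1)[OF n2, of x] W1_dist_dirac_real(2)[OF n1, of x] by simp
  also have "\<dots> \<le> W1_dist \<nu>1 \<nu>2" by (rule le)
  also have "\<dots> \<le> ennreal ?c" using W1_dist_le[OF \<pi>] coup_cost_nn[OF \<pi> n1 n2] by simp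
  finally have cc: "ennreal ?a + ennreal ?b \<le> ennreal ?c" .
  have "ennreal (?a + ?b) \<le> ennreal ?c" by (subst ennreal_plus[OF a0 b0]) (rule cc)
  then have ineq: "?a + ?b \<le> ?c" by (rule iffD1[OF ennreal_le_iff[OF c0]])
  have m: "(\<lambda>y. dist x y) \<in> borel_measurable borel" by measurable
  have i1: "integrable ?\<pi> (\<lambda>p. dist x (fst p))" using coup_int_fst(2)[OF \<pi> m] W1_int[OF n1] by simp
  have i2: "integrable ?\<pi> (\<lambda>p. dist x (snd p))" using coup_int_snd(2)[OF \<pi> m] W1_int[OF n2] by simp
  have i3: "integrable ?\<pi> (\<lambda>p. dist (fst p) (snd p))" by (rule coup_cost_int[OF \<pi> n1 n2])
  let ?g = "\<lambda>p. dist x (fst p) + dist x (snd p) - dist (fst p) (snd p)"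
  have ig: "integrable ?\<pi> ?g" using i1 i2 i3 by auto
  have "(\<integral>p. ?g p \<partial>?\<pi>) = ?a + ?b - ?c"
    using coup_int_fst(1)[OF \<pi> m] coup_int_snd(1)[OF \<pi> m] i1 i2 i3 by simp
  then have "(\<integral>p. ?g p \<partial>?\<pi>) \<le> 0" using ineq by simp
  moreover have gnn: "0 \<le> ?g p" for p
    using dist_triangle[of "fst p" "snd p" x] by (simp add: dist_commute) 
  moreover have "(\<integral>p. ?g p \<partial>?\<pi>) \<ge> 0" by (rule integral_nonneg_AE, rule AE_I2, rule gnn)
  ultimately have "(\<integral>p. ?g p \<partial>?\<pi>) = 0" by linarith
  then have "AE p in ?\<pi>. ?g p = 0"
    using integral_nonneg_eq_0_iff_AE[OF ig] gnn by simp
  then have AE: "AE p in ?\<pi>. fst p = x \<or> snd p = x"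
  proof eventually_elim
    case (elim p)
    show ?case
    proof (rule ccontr)
      assume "\<not> (fst p = x \<or> snd p = x)"
      then have "dist (fst p) (snd p) < dist (fst p) x + dist x (snd p)" using st[of x "fst p" "snd p"] by auto
      then show False using elim by (simp add: dist_commute)
    qed
  qed
  have s1: "sets \<nu>1 = sets borel" and s2: "sets \<nu>2 = sets borel"
    and p1: "prob_space \<nu>1" and p2: "prob_space \<nu>2" using W1_D[OF n1] W1_D[OF n2] by auto
  have ox: "-{x} \<in> sets borel" by (simp add: borel_open)
  have Ns: "(-{x}) \<times> (-{x}) \<in> sets ?\<pi>" using ox s1 s2 by simp
  have "{p \<in> space ?\<pi>. \<not> (fst p = x \<or> snd p = x)} = (-{x}) \<times> (-{x})"
    using W1_D(3)[OF n1] W1_D(3)[OF n2] by (auto simp: space_pair_measure)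
  then have "emeasure ?\<pi> ((-{x}) \<times> (-{x})) = 0" by (rule iffD1[OF AE_iff_measurable[OF Ns] AE])
  moreover have "emeasure ?\<pi> ((-{x}) \<times> (-{x})) = emeasure \<nu>1 (-{x}) * emeasure \<nu>2 (-{x})"
    using ox s1 s2 p2 by (intro sigma_finite_measure.emeasure_pair_measure_Times) (auto simp: prob_space_imp_sigma_finite)
  ultimately have "emeasure \<nu>1 (-{x}) = 0 \<or> emeasure \<nu>2 (-{x}) = 0" by simp
  then show "\<nu>1 = return borel x \<or> \<nu>2 = return borel x"
    using compl_zero_dirac[OF n1] compl_zero_dirac[OF n2] by blast
qed

definition madd :: "'a measure \<Rightarrow> 'a measure \<Rightarrow> 'a measure" where
  "madd M N = measure_of (space M) (sets M) (\<lambda>A. emeasure M A + emeasure N A)"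

lemma sets_madd[simp, measurable_cong]: "sets (madd M N) = sets M"
  by (simp add: madd_def)

lemma space_madd[simp]: "space (madd M N) = space M"
  by (simp add: madd_def)

lemma emeasure_madd:
  assumes "sets N = sets M"
  shows "emeasure (madd M N) A = emeasure M A + emeasure N A"
proof (cases "A \<in> sets M")
  case True
  show ?thesis unfolding madd_def
  proof (rule emeasure_measure_of_sigma)
    show "sigma_algebra (space M) (sets M)" ..
    show "positive (sets M) (\<lambda>A. emeasure M A + emeasure N A)" by (simp add: positive_def)
    show "countably_additive (sets M) (\<lambda>A. emeasure M A + emeasure N A)"
    proof (rule countably_additiveI)
      fix A :: "nat \<Rightarrow> _" assume *: "range A \<subseteq> sets M" "disjoint_family A"
      have **: "range A \<subseteq> sets N" using * assms by simp
      have "(\<Sum>i. emeasure M (A i) + emeasure N (A i)) = (\<Sum>i. emeasure M (A i)) + (\<Sum>i. emeasure N (A i))"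
        by (rule suminf_add[symmetric]) auto
      also have "\<dots> = emeasure M (\<Union>i. A i) + emeasure N (\<Union>i. A i)"
        using * ** by (simp add: suminf_emeasure)
      finally show "(\<Sum>i. emeasure M (A i) + emeasure N (A i)) = emeasure M (\<Union>i. A i) + emeasure N (\<Union>i. A i)" .
    qed
  qed (fact True)
next
  case False
  then show ?thesis using assms by (simp add: emeasure_notin_sets)
qed

lemma nn_integral_madd:
  assumes sN: "sets N = sets M" and f: "f \<in> borel_measurable M"
  shows "(\<integral>\<^sup>+x. f x \<partial>madd M N) = (\<integral>\<^sup>+x. f x \<partial>M) + (\<integral>\<^sup>+x. f x \<partial>N)"
  using f
proof induction
  case (cong f g)
  have "space N = space M" using sets_eq_imp_space_eq[OF sN] .
  with cong show ?case
    by (simp cong: nn_integral_cong_simp)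
next
  case (set A)
  then show ?case using sN by (simp add: emeasure_madd)
next
  case (mult f c)
  have m1: "f \<in> borel_measurable (madd M N)" using mult by (simp add: measurable_cong_sets[OF sets_madd refl])
  have m2: "f \<in> borel_measurable N" using mult by (simp add: measurable_cong_sets[OF sN refl])
  show ?case using mult m1 m2 by (simp add: nn_integral_cmult distrib_left)
next
  case (add f g)
  have m1: "f \<in> borel_measurable (madd M N)" "g \<in> borel_measurable (madd M N)"
    using add by (simp_all add: measurable_cong_sets[OF sets_madd refl])
  have m2: "f \<in> borel_measurable N" "g \<in> borel_measurable N"
    using add by (simp_all add: measurable_cong_sets[OF sN refl])
  show ?case using add m1 m2 by (simp add: nn_integral_add ac_simps)
next
  case (seq U)
  have m1: "U i \<in> borel_measurable (madd M N)" for i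
    using seq by (simp add: measurable_cong_sets[OF sets_madd refl])
  have m2: "U i \<in> borel_measurable N" for i
    using seq by (simp add: measurable_cong_sets[OF sN refl])
  have i1: "incseq (\<lambda>i. \<integral>\<^sup>+x. U i x \<partial>M)" using \<open>incseq U\<close>
    by (auto simp: incseq_def le_fun_def intro!: nn_integral_mono)
  have i2: "incseq (\<lambda>i. \<integral>\<^sup>+x. U i x \<partial>N)" using \<open>incseq U\<close>
    by (auto simp: incseq_def le_fun_def intro!: nn_integral_mono)
  have "(\<integral>\<^sup>+x. (SUP i. U i) x \<partial>madd M N) = (SUP i. \<integral>\<^sup>+x. U i x \<partial>madd M N)"
    using m1 \<open>incseq U\<close> by (simp add: nn_integral_monotone_convergence_SUP image_comp)
  also have "\<dots> = (SUP i. (\<integral>\<^sup>+x. U i x \<partial>M) + (\<integral>\<^sup>+x. U i x \<partial>N))" using seq by simp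
  also have "\<dots> = (SUP i. \<integral>\<^sup>+x. U i x \<partial>M) + (SUP i. \<integral>\<^sup>+x. U i x \<partial>N)"
    by (rule ennreal_SUP_add[OF i1 i2])
  also have "\<dots> = (\<integral>\<^sup>+x. (SUP i. U i) x \<partial>M) + (\<integral>\<^sup>+x. (SUP i. U i) x \<partial>N)"
    using m2 seq \<open>incseq U\<close> by (simp add: nn_integral_monotone_convergence_SUP image_comp)
  finally show ?case .
qed

lemma diag_meas: assumes "sets M = sets borel" shows "(\<lambda>x::'a::polish_space. (x, x)) \<in> measurable M borel"
proof -
  have "continuous_on UNIV (\<lambda>x::'a. (x,x))" by (intro continuous_intros)
  then have "(\<lambda>x::'a. (x,x)) \<in> borel_measurable borel" by (rule borel_measurable_continuous_onI)
  then show ?thesis by (rule meas_cong_borel[OF assms])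
qed

lemma mix_coupling:
  fixes \<pi> :: "('a::polish_space \<times> 'a) measure"
  assumes \<pi>: "\<pi> \<in> couplings \<alpha> \<beta>" and \<kappa>: "\<kappa> \<in> W1" and s: "0 \<le> s" "s \<le> 1"
  defines "\<gamma> \<equiv> madd (scale_measure (ennreal s) \<pi>) (scale_measure (ennreal (1-s)) (distr \<kappa> borel (\<lambda>x. (x,x))))"
  shows "\<gamma> \<in> couplings (madd (scale_measure (ennreal s) \<alpha>) (scale_measure (ennreal (1-s)) \<kappa>))
                     (madd (scale_measure (ennreal s) \<beta>) (scale_measure (ennreal (1-s)) \<kappa>))"
    "(\<integral>\<^sup>+p. ennreal (dist (fst p) (snd p)) \<partial>\<gamma>) = ennreal s * (\<integral>\<^sup>+p. ennreal (dist (fst p) (snd p)) \<partial>\<pi>)"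
proof -
  have sp: "sets \<pi> = sets borel" "space \<pi> = UNIV" "prob_space \<pi>" using coupD[OF \<pi>] by auto
  have sk: "sets \<kappa> = sets borel" "space \<kappa> = UNIV" "prob_space \<kappa>" using W1_D[OF \<kappa>] by auto
  have dm: "(\<lambda>x::'a. (x, x)) \<in> measurable \<kappa> borel" by (rule diag_meas[OF sk(1)])
  let ?D = "distr \<kappa> borel (\<lambda>x. (x,x))"
  have sD: "sets (scale_measure (ennreal (1-s)) ?D) = sets (scale_measure (ennreal s) \<pi>)"
    using sp by simp
  have sg: "sets \<gamma> = sets borel" unfolding \<gamma>_def using sp by simp
  have spg: "space \<gamma> = UNIV" unfolding \<gamma>_def using sp by (simp add: space_scale_measure)
  have eg: "emeasure \<gamma> S = ennreal s * emeasure \<pi> S + ennreal (1-s) * emeasure ?D S" for S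
    unfolding \<gamma>_def by (simp add: emeasure_madd[OF sD])
  have mfst: "fst \<in> measurable \<gamma> borel" "snd \<in> measurable \<gamma> borel"
    using coup_meas[of \<pi> \<alpha> \<beta>] \<pi> measurable_cong_sets[OF sg[symmetric] refl, of borel] sp(1)
      measurable_cong_sets[OF sp(1) refl, of borel] by auto
  have ssum: "ennreal s + ennreal (1 - s) = 1" using s by (simp add: ennreal_plus[symmetric] del: ennreal_plus)
  have ps: "prob_space \<gamma>"
  proof (rule prob_spaceI)
    have "emeasure \<pi> UNIV = 1" using prob_space.emeasure_space_1[OF sp(3)] sp(2) by simp
    moreover have "emeasure ?D UNIV = 1"
      using emeasure_distr[OF dm, of UNIV] prob_space.emeasure_space_1[OF sk(3)] sk(2) by simp
    ultimately show "emeasure \<gamma> (space \<gamma>) = 1" using spg eg ssum by simp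
  qed
  have marg: "emeasure (distr \<gamma> borel f) B = ennreal s * emeasure (distr \<pi> borel f) B + ennreal (1-s) * emeasure \<kappa> B"
    if B: "B \<in> sets borel" and f: "f = fst \<or> f = snd" for B f
  proof -
    have mf: "f \<in> measurable \<gamma> borel" and mf': "f \<in> measurable \<pi> borel" using f mfst coup_meas[OF \<pi>] by auto
    have "emeasure (distr \<gamma> borel f) B = emeasure \<gamma> (f -` B)"
      using emeasure_distr[OF mf B] spg by simp
    also have "\<dots> = ennreal s * emeasure \<pi> (f -` B) + ennreal (1-s) * emeasure ?D (f -` B)" by (rule eg)
    also have "emeasure \<pi> (f -` B) = emeasure (distr \<pi> borel f) B"
      using emeasure_distr[OF mf' B] sp(2) by simp
    also have "emeasure ?D (f -` B) = emeasure \<kappa> B"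
    proof -
      have fB: "f -` B \<in> sets (borel :: ('a \<times> 'a) measure)"
        using measurable_sets[OF mf B] spg sg by simp
      have "emeasure ?D (f -` B) = emeasure \<kappa> ((\<lambda>x. (x,x)) -` (f -` B) \<inter> space \<kappa>)"
        by (rule emeasure_distr[OF dm fB])
      also have "(\<lambda>x. (x,x)) -` (f -` B) \<inter> space \<kappa> = B" using f sk(2) by auto
      finally show ?thesis .
    qed
    finally show ?thesis .
  qed
  show "\<gamma> \<in> couplings (madd (scale_measure (ennreal s) \<alpha>) (scale_measure (ennreal (1-s)) \<kappa>))
                     (madd (scale_measure (ennreal s) \<beta>) (scale_measure (ennreal (1-s)) \<kappa>))"
    unfolding couplings_def
  proof (intro CollectI conjI sg ps)
    have sa: "sets \<alpha> = sets borel" using coupD(3)[OF \<pi>] by (metis sets_distr)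
    have sb: "sets \<beta> = sets borel" using coupD(4)[OF \<pi>] by (metis sets_distr)
    show "distr \<gamma> borel fst = madd (scale_measure (ennreal s) \<alpha>) (scale_measure (ennreal (1-s)) \<kappa>)"
    proof (rule measure_eqI)
      show "sets (distr \<gamma> borel fst) = sets (madd (scale_measure (ennreal s) \<alpha>) (scale_measure (ennreal (1-s)) \<kappa>))"
        using sa by simp
      fix B assume "B \<in> sets (distr \<gamma> borel fst)"
      then have B: "B \<in> sets borel" by simp
      show "emeasure (distr \<gamma> borel fst) B = emeasure (madd (scale_measure (ennreal s) \<alpha>) (scale_measure (ennreal (1-s)) \<kappa>)) B"
        using marg[OF B] coupD(3)[OF \<pi>] sa sk(1) by (simp add: emeasure_madd)
    qed
    show "distr \<gamma> borel snd = madd (scale_measure (ennreal s) \<beta>) (scale_measure (ennreal (1-s)) \<kappa>)"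
    proof (rule measure_eqI)
      show "sets (distr \<gamma> borel snd) = sets (madd (scale_measure (ennreal s) \<beta>) (scale_measure (ennreal (1-s)) \<kappa>))"
        using sb by simp
      fix B assume "B \<in> sets (distr \<gamma> borel snd)"
      then have B: "B \<in> sets borel" by simp
      show "emeasure (distr \<gamma> borel snd) B = emeasure (madd (scale_measure (ennreal s) \<beta>) (scale_measure (ennreal (1-s)) \<kappa>)) B"
        using marg[OF B] coupD(4)[OF \<pi>] sb sk(1) by (simp add: emeasure_madd)
    qed
  qed
  have cm: "(\<lambda>p::'a\<times>'a. ennreal (dist (fst p) (snd p))) \<in> borel_measurable borel"
    by (rule meas_cong_borel2[OF refl]) measurable
  have cm1: "(\<lambda>p::'a\<times>'a. ennreal (dist (fst p) (snd p))) \<in> borel_measurable (scale_measure (ennreal s) \<pi>)"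
    using meas_cong_borel[OF _ cm, of "scale_measure (ennreal s) \<pi>"] sp by simp
  have cm2: "(\<lambda>p::'a\<times>'a. ennreal (dist (fst p) (snd p))) \<in> borel_measurable \<pi>"
    using meas_cong_borel[OF sp(1) cm] .
  have cm3: "(\<lambda>p::'a\<times>'a. ennreal (dist (fst p) (snd p))) \<in> borel_measurable ?D"
    using cm by simp
  have "(\<integral>\<^sup>+p. ennreal (dist (fst p) (snd p)) \<partial>\<gamma>) =
     ennreal s * (\<integral>\<^sup>+p. ennreal (dist (fst p) (snd p)) \<partial>\<pi>) + ennreal (1-s) * (\<integral>\<^sup>+p. ennreal (dist (fst p) (snd p)) \<partial>?D)"
    unfolding \<gamma>_def
    by (simp add: nn_integral_madd[OF sD cm1] nn_integral_scale_measure[OF cm2] nn_integral_scale_measure[OF cm3])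
  also have "(\<integral>\<^sup>+p. ennreal (dist (fst p) (snd p)) \<partial>?D) = 0"
    by (simp add: nn_integral_distr[OF dm cm3])
  finally show "(\<integral>\<^sup>+p. ennreal (dist (fst p) (snd p)) \<partial>\<gamma>) = ennreal s * (\<integral>\<^sup>+p. ennreal (dist (fst p) (snd p)) \<partial>\<pi>)"
    by simp
qed

lemma dens_W1:
  fixes \<mu> :: "'a::polish_space measure"
  assumes \<mu>: "\<mu> \<in> W1" and C: "C \<in> sets borel" and c: "c > 0" "c * measure \<mu> C = 1"
  defines "\<nu> \<equiv> density \<mu> (\<lambda>x. ennreal c * indicator C x)"
  shows "\<nu> \<in> W1" "\<And>B. B \<in> sets borel \<Longrightarrow> emeasure \<nu> B = ennreal c * emeasure \<mu> (C \<inter> B)"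
proof -
  have s: "sets \<mu> = sets borel" and ps: "prob_space \<mu>" and sp: "space \<mu> = UNIV" using W1_D[OF \<mu>] by auto
  interpret prob_space \<mu> by (rule ps)
  have Cs: "C \<in> sets \<mu>" using C s by simp
  have dm: "(\<lambda>x. ennreal c * indicator C x) \<in> borel_measurable \<mu>"
    using Cs by measurable
  show em: "emeasure \<nu> B = ennreal c * emeasure \<mu> (C \<inter> B)" if B: "B \<in> sets borel" for B
  proof -
    have Bs: "B \<in> sets \<mu>" using B s by simp
    have "emeasure \<nu> B = (\<integral>\<^sup>+x. ennreal c * indicator (C \<inter> B) x \<partial>\<mu>)"
      unfolding \<nu>_def by (subst emeasure_density[OF dm Bs]) (simp add: indicator_inter_arith mult.assoc)
    also have "\<dots> = ennreal c * emeasure \<mu> (C \<inter> B)"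
      using Cs Bs by (intro nn_integral_cmult_indicator) auto
    finally show ?thesis .
  qed
  have sn: "sets \<nu> = sets borel" unfolding \<nu>_def using s by simp
  have "emeasure \<nu> UNIV = 1"
  proof -
    have "emeasure \<nu> UNIV = ennreal c * emeasure \<mu> C" using em[of UNIV] by simp
    also have "\<dots> = ennreal c * ennreal (measure \<mu> C)" by (simp add: emeasure_eq_measure)
    also have "\<dots> = ennreal (c * measure \<mu> C)" by (rule ennreal_mult[symmetric]) (use c in auto)
    finally show ?thesis using c by simp
  qed
  then have pn: "prob_space \<nu>" using sn by (intro prob_spaceI) (simp add: \<nu>_def sp)
  fix y0 :: 'a
  have dm2: "(\<lambda>x. ennreal (dist x y0)) \<in> borel_measurable \<mu>" by (rule meas_cong_borel[OF s]) measurable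
  have "(\<integral>\<^sup>+x. ennreal (dist x y0) \<partial>\<nu>) = (\<integral>\<^sup>+x. ennreal c * indicator C x * ennreal (dist x y0) \<partial>\<mu>)"
    unfolding \<nu>_def by (rule nn_integral_density[OF dm dm2])
  also have "\<dots> \<le> (\<integral>\<^sup>+x. ennreal c * ennreal (dist x y0) \<partial>\<mu>)"
    by (intro nn_integral_mono) (auto simp: indicator_def)
  also have "\<dots> = ennreal c * (\<integral>\<^sup>+x. ennreal (dist x y0) \<partial>\<mu>)"
    by (rule nn_integral_cmult[OF dm2])
  also have "\<dots> < \<infinity>" using W1_nn_moment[OF \<mu>, of y0] by (simp add: ennreal_mult_less_top)
  finally have "(\<integral>\<^sup>+x. ennreal (dist x y0) \<partial>\<nu>) < \<infinity>" .
  then show "\<nu> \<in> W1" unfolding W1_def using sn pn by auto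
qed

lemma self_mix:
  assumes "0 \<le> s" "s \<le> 1"
  shows "madd (scale_measure (ennreal s) M) (scale_measure (ennreal (1-s)) M) = M"
proof (rule measure_eqI)
  show "sets (madd (scale_measure (ennreal s) M) (scale_measure (ennreal (1-s)) M)) = sets M" by simp
  fix B
  have "ennreal s + ennreal (1 - s) = 1" using assms by (simp add: ennreal_plus[symmetric] del: ennreal_plus)
  then have "ennreal s * emeasure M B + ennreal (1-s) * emeasure M B = emeasure M B"
    by (metis distrib_right mult_1)
  then show "emeasure (madd (scale_measure (ennreal s) M) (scale_measure (ennreal (1-s)) M)) B = emeasure M B"
    by (simp add: emeasure_madd)
qed

lemma nondirac_not_Pext:
  fixes \<mu> :: "'a::polish_space measure"
  assumes \<mu>: "\<mu> \<in> W1" and A: "A \<in> sets borel" and a: "0 < measure \<mu> A" "measure \<mu> A < 1"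
  shows "\<not> Pext \<mu>"
proof -
  define a where "a = measure \<mu> A"
  have a0: "0 < a" "a < 1" using a unfolding a_def by auto
  have s: "sets \<mu> = sets borel" and ps: "prob_space \<mu>" and sp: "space \<mu> = UNIV" using W1_D[OF \<mu>] by auto
  interpret prob_space \<mu> by (rule ps)
  have As: "A \<in> sets \<mu>" using A s by simp
  have cA: "-A \<in> sets borel" using A by auto
  have mcA: "measure \<mu> (-A) = 1 - a"
    using prob_compl[OF As] sp unfolding a_def by (simp add: Compl_eq_Diff_UNIV)
  define \<nu>1 where "\<nu>1 = density \<mu> (\<lambda>x. ennreal (1/a) * indicator A x)"
  define \<nu>2 where "\<nu>2 = density \<mu> (\<lambda>x. ennreal (1/(1-a)) * indicator (-A) x)"
  have n1: "\<nu>1 \<in> W1" and e1: "\<And>B. B \<in> sets borel \<Longrightarrow> emeasure \<nu>1 B = ennreal (1/a) * emeasure \<mu> (A \<inter> B)"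
    using dens_W1[OF \<mu> A, of "1/a"] a0 unfolding \<nu>1_def a_def by auto
  have n2: "\<nu>2 \<in> W1" and e2: "\<And>B. B \<in> sets borel \<Longrightarrow> emeasure \<nu>2 B = ennreal (1/(1-a)) * emeasure \<mu> (-A \<inter> B)"
    using dens_W1[OF \<mu> cA, of "1/(1-a)"] a0 mcA unfolding \<nu>2_def by auto
  have s1: "sets \<nu>1 = sets borel" and s2: "sets \<nu>2 = sets borel" using W1_D(1)[OF n1] W1_D(1)[OF n2] by auto
  have mu_mix: "madd (scale_measure (ennreal a) \<nu>1) (scale_measure (ennreal (1-a)) \<nu>2) = \<mu>"
  proof (rule measure_eqI)
    show "sets (madd (scale_measure (ennreal a) \<nu>1) (scale_measure (ennreal (1-a)) \<nu>2)) = sets \<mu>" using s1 s by simp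
    fix B assume "B \<in> sets (madd (scale_measure (ennreal a) \<nu>1) (scale_measure (ennreal (1-a)) \<nu>2))"
    then have B: "B \<in> sets borel" using s1 by simp
    have "ennreal a * ennreal (1/a) = 1" using a0 by (simp add: ennreal_mult[symmetric])
    moreover have "ennreal (1-a) * ennreal (1/(1-a)) = 1" using a0 by (simp add: ennreal_mult[symmetric])
    moreover have "emeasure \<mu> (A \<inter> B) + emeasure \<mu> (-A \<inter> B) = emeasure \<mu> B"
    proof -
      have "emeasure \<mu> ((A \<inter> B) \<union> (-A \<inter> B)) = emeasure \<mu> (A \<inter> B) + emeasure \<mu> (-A \<inter> B)"
        using A B s by (intro plus_emeasure[symmetric]) auto
      moreover have "(A \<inter> B) \<union> (-A \<inter> B) = B" by auto
      ultimately show ?thesis by simp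
    qed
    ultimately show "emeasure (madd (scale_measure (ennreal a) \<nu>1) (scale_measure (ennreal (1-a)) \<nu>2)) B = emeasure \<mu> B"
      using s1 s2 B by (simp add: emeasure_madd e1 e2 mult.assoc[symmetric])
  qed
  have mu_mix': "madd (scale_measure (ennreal (1-a)) \<nu>2) (scale_measure (ennreal (1-(1-a))) \<nu>1) = \<mu>"
  proof -
    have "madd (scale_measure (ennreal (1-a)) \<nu>2) (scale_measure (ennreal (1-(1-a))) \<nu>1)
        = madd (scale_measure (ennreal a) \<nu>1) (scale_measure (ennreal (1-a)) \<nu>2)"
      unfolding madd_def using s1 s2 by (simp add: add.commute space_scale_measure sets_eq_imp_space_eq[of \<nu>1 \<nu>2])
    then show ?thesis using mu_mix by simp
  qed
  let ?D = "W1_dist \<nu>1 \<nu>2"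
  have cne: "couplings \<nu>1 \<nu>2 \<noteq> {}" by (rule couplings_nonempty[OF n1 n2])
  have d1: "W1_dist \<nu>1 \<mu> \<le> ennreal (1-a) * ?D"
    unfolding W1_dist_def[of \<nu>1 \<nu>2]
  proof (rule INF_mult_bound[OF _ cne])
    fix \<pi> assume \<pi>: "\<pi> \<in> couplings \<nu>1 \<nu>2"
    have h1: "0 \<le> 1-a" "1-a \<le> 1" using a0 by auto
    note mc = mix_coupling[OF \<pi> n1 h1]
    have c1: "madd (scale_measure (ennreal (1-a)) \<pi>) (scale_measure (ennreal (1-(1-a))) (distr \<nu>1 borel (\<lambda>x. (x,x))))
        \<in> couplings \<nu>1 \<mu>" using mc(1) unfolding self_mix[OF h1] mu_mix' .
    show "W1_dist \<nu>1 \<mu> \<le> ennreal (1-a) * (\<integral>\<^sup>+p. ennreal (dist (fst p) (snd p)) \<partial>\<pi>)"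
      using W1_dist_le[OF c1] mc(2) by simp
  qed (use a0 in auto)
  have d2: "W1_dist \<mu> \<nu>2 \<le> ennreal a * ?D"
    unfolding W1_dist_def[of \<nu>1 \<nu>2]
  proof (rule INF_mult_bound[OF _ cne])
    fix \<pi> assume \<pi>: "\<pi> \<in> couplings \<nu>1 \<nu>2"
    have h2: "0 \<le> a" "a \<le> 1" using a0 by auto
    note mc = mix_coupling[OF \<pi> n2 h2]
    have c2: "madd (scale_measure (ennreal a) \<pi>) (scale_measure (ennreal (1-a)) (distr \<nu>2 borel (\<lambda>x. (x,x))))
        \<in> couplings \<mu> \<nu>2" using mc(1) unfolding self_mix[OF h2] mu_mix .
    show "W1_dist \<mu> \<nu>2 \<le> ennreal a * (\<integral>\<^sup>+p. ennreal (dist (fst p) (snd p)) \<partial>\<pi>)"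
      using W1_dist_le[OF c2] mc(2) by simp
  qed (use a0 in auto)
  have "W1_dist \<nu>1 \<mu> + W1_dist \<mu> \<nu>2 \<le> ennreal (1-a) * ?D + ennreal a * ?D"
    by (rule add_mono[OF d1 d2])
  also have "\<dots> = (ennreal (1-a) + ennreal a) * ?D" by (simp add: distrib_right)
  also have "ennreal (1-a) + ennreal a = 1" using a0 by (simp add: ennreal_plus[symmetric] del: ennreal_plus)
  finally have ineq: "W1_dist \<nu>1 \<mu> + W1_dist \<mu> \<nu>2 \<le> W1_dist \<nu>1 \<nu>2" by simp
  have "emeasure \<nu>1 A = 1"
  proof -
    have "emeasure \<nu>1 A = ennreal (1/a) * ennreal a" using e1[OF A] by (simp add: emeasure_eq_measure a_def)
    also have "\<dots> = 1" using a0 by (simp add: ennreal_mult[symmetric])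
    finally show ?thesis .
  qed
  moreover have "emeasure \<mu> A = ennreal a" by (simp add: emeasure_eq_measure a_def)
  ultimately have ne1: "\<nu>1 \<noteq> \<mu>" using a0 by auto
  have "emeasure \<nu>2 A = 0" using e2[OF A] by simp
  moreover have "emeasure \<mu> A = ennreal a" by (simp add: emeasure_eq_measure a_def)
  ultimately have ne2: "\<nu>2 \<noteq> \<mu>" using a0 by auto
  show ?thesis unfolding Pext_def using n1 n2 ineq ne1 ne2 by blast
qed

lemma countable_dense_seq:
  obtains c :: "nat \<Rightarrow> 'a::polish_space" where "\<And>x e. e > 0 \<Longrightarrow> \<exists>k. dist x (c k) < e"
proof -
  obtain D :: "'a set" where D: "countable D" "\<And>U. open U \<Longrightarrow> U \<noteq> {} \<Longrightarrow> \<exists>d\<in>D. d \<in> U"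
    using countable_dense_exists by blast
  have Dne: "D \<noteq> {}" using D(2)[of UNIV] by auto
  have r: "range (from_nat_into D) = D" using range_from_nat_into[OF Dne D(1)] .
  show thesis
  proof (rule that)
    fix x :: 'a and e :: real assume "e > 0"
    then obtain d where d: "d \<in> D" "d \<in> ball x e" using D(2)[of "ball x e"] by auto
    then obtain k where "from_nat_into D k = d" using r by (metis rangeE)
    then show "\<exists>k. dist x (from_nat_into D k) < e" using d by auto
  qed
qed

lemma zero_one_dirac:
  fixes \<mu> :: "'a::polish_space measure"
  assumes \<mu>: "\<mu> \<in> W1" and zo: "\<And>A. A \<in> sets borel \<Longrightarrow> measure \<mu> A = 0 \<or> measure \<mu> A = 1"
  shows "\<exists>x. \<mu> = return borel x"
proof -
  have s: "sets \<mu> = sets borel" and ps: "prob_space \<mu>" and sp: "space \<mu> = UNIV" using W1_D[OF \<mu>] by auto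
  interpret prob_space \<mu> by (rule ps)
  obtain c :: "nat \<Rightarrow> 'a" where c: "\<And>x e. e > 0 \<Longrightarrow> \<exists>k. dist x (c k) < e" using countable_dense_seq by blast
  have "\<exists>k. measure \<mu> (ball (c k) (1/Suc n)) = 1" for n
  proof (rule ccontr)
    assume "\<not> (\<exists>k. measure \<mu> (ball (c k) (1/Suc n)) = 1)"
    then have z: "measure \<mu> (ball (c k) (1/Suc n)) = 0" for k using zo[of "ball (c k) (1/Suc n)"] by auto
    have "AE x in \<mu>. x \<notin> ball (c k) (1/Suc n)" for k
    proof (rule AE_not_in)
      have "ball (c k) (1/Suc n) \<in> sets \<mu>" using s by simp
      then show "ball (c k) (1/Suc n) \<in> null_sets \<mu>" using z[of k] by (auto simp: null_sets_def emeasure_eq_measure)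
    qed
    have ex: "\<exists>k. x \<in> ball (c k) (1/Suc n)" for x using c[of "1/Suc n" x] by (auto simp: dist_commute)
    have "AE x in \<mu>. \<forall>k. x \<notin> ball (c k) (1/Suc n)" using \<open>\<And>k. AE x in \<mu>. x \<notin> ball (c k) (1/Suc n)\<close> by (simp add: AE_all_countable)
    then have "AE x in \<mu>. False"
    proof eventually_elim
      case (elim x) with ex[of x] show False by blast
    qed
    then show False using AE_False by simp
  qed
  then obtain k where k: "\<And>n. measure \<mu> (ball (c (k n)) (1/Suc n)) = 1" by metis
  have "AE x in \<mu>. x \<in> ball (c (k n)) (1/Suc n)" for n using AE_prob_1[OF k[of n]] .
  then have AE: "AE x in \<mu>. \<forall>n. x \<in> ball (c (k n)) (1/Suc n)" by (simp add: AE_all_countable)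
  have "\<exists>x0. \<forall>n. x0 \<in> ball (c (k n)) (1/Suc n)"
  proof (rule ccontr)
    assume "\<not> (\<exists>x0. \<forall>n. x0 \<in> ball (c (k n)) (1/Suc n))"
    note nx = this
    from AE have "AE x in \<mu>. False"
    proof eventually_elim
      case (elim x) with nx show False by blast
    qed
    then show False using AE_False by simp
  qed
  then obtain x0 where x0: "\<And>n. x0 \<in> ball (c (k n)) (1/Suc n)" by blast
  have "AE x in \<mu>. x = x0" using AE
  proof eventually_elim
    case (elim x)
    show "x = x0"
    proof (rule ccontr)
      assume "x \<noteq> x0"
      then have "dist x x0 / 2 > 0" by simp
      then obtain n where n: "inverse (real (Suc n)) < dist x x0 / 2" using reals_Archimedean by blast
      have "dist x x0 \<le> dist x (c (k n)) + dist (c (k n)) x0" by (rule dist_triangle)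
      also have "\<dots> < 1/Suc n + 1/Suc n" using elim[rule_format, of n] x0[of n]
        by (intro add_strict_mono) (auto simp: dist_commute)
      finally show False using n by (simp add: inverse_eq_divide)
    qed
  qed
  moreover have e: "{x \<in> space \<mu>. \<not> x = x0} = -{x0}" using sp by auto
  moreover have ms: "-{x0} \<in> sets \<mu>" using s by (simp add: borel_open)
  ultimately have "emeasure \<mu> (-{x0}) = 0" using AE_iff_measurable[OF ms e] by simp
  then show ?thesis using compl_zero_dirac[OF \<mu>] by blast
qed

lemma Pext_iff_dirac:
  fixes \<mu> :: "'a::polish_space measure"
  assumes st: "\<And>x y z::'a. z \<noteq> x \<Longrightarrow> z \<noteq> y \<Longrightarrow> dist x y < dist x z + dist z y"
    and \<mu>: "\<mu> \<in> W1"
  shows "Pext \<mu> \<longleftrightarrow> (\<exists>x. \<mu> = return borel x)"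
proof
  assume P: "Pext \<mu>"
  show "\<exists>x. \<mu> = return borel x"
  proof (rule zero_one_dirac[OF \<mu>], rule ccontr)
    fix A :: "'a set" assume A: "A \<in> sets borel" and nz: "\<not> (measure \<mu> A = 0 \<or> measure \<mu> A = 1)"
    have ps: "prob_space \<mu>" using W1_D[OF \<mu>] by simp
    have m0: "0 \<le> measure \<mu> A" by (rule measure_nonneg)
    have m1: "measure \<mu> A \<le> 1" using prob_space.prob_le_1[OF ps] .
    have n0: "measure \<mu> A \<noteq> 0" and n1: "measure \<mu> A \<noteq> 1" using nz by auto
    have "0 < measure \<mu> A" using m0 n0 by linarith
    moreover have "measure \<mu> A < 1" using m1 n1 by linarith
    ultimately have "0 < measure \<mu> A" "measure \<mu> A < 1" by auto
    then show False using nondirac_not_Pext[OF \<mu> A] P by blast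
  qed
next
  assume "\<exists>x. \<mu> = return borel x"
  then show "Pext \<mu>" using dirac_Pext[OF st] by blast
qed

lemma iso_Pext:
  fixes \<Phi> :: "'a::polish_space measure \<Rightarrow> 'a measure"
  assumes iso: "W1_isometry \<Phi>" and \<mu>: "\<mu> \<in> W1"
  shows "Pext (\<Phi> \<mu>) \<longleftrightarrow> Pext \<mu>"
proof -
  have bij: "bij_betw \<Phi> W1 W1" and dp: "\<And>a b. a \<in> W1 \<Longrightarrow> b \<in> W1 \<Longrightarrow> W1_dist (\<Phi> a) (\<Phi> b) = W1_dist a b"
    using iso unfolding W1_isometry_def by auto
  have img: "\<Phi> ` W1 = W1" using bij by (simp add: bij_betw_def)
  have inj: "inj_on \<Phi> W1" using bij by (simp add: bij_betw_def)
  show ?thesis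
  proof
    assume P: "Pext (\<Phi> \<mu>)"
    show "Pext \<mu>" unfolding Pext_def
    proof (intro ballI impI)
      fix \<nu>1 \<nu>2 assume n1: "\<nu>1 \<in> W1" and n2: "\<nu>2 \<in> W1"
        and le: "W1_dist \<nu>1 \<mu> + W1_dist \<mu> \<nu>2 \<le> W1_dist \<nu>1 \<nu>2"
      have "\<Phi> \<nu>1 \<in> W1" "\<Phi> \<nu>2 \<in> W1" using img n1 n2 by auto
      moreover have "W1_dist (\<Phi> \<nu>1) (\<Phi> \<mu>) + W1_dist (\<Phi> \<mu>) (\<Phi> \<nu>2) \<le> W1_dist (\<Phi> \<nu>1) (\<Phi> \<nu>2)"
        using le dp[OF n1 \<mu>] dp[OF \<mu> n2] dp[OF n1 n2] by simp
      ultimately have "\<Phi> \<nu>1 = \<Phi> \<mu> \<or> \<Phi> \<nu>2 = \<Phi> \<mu>" using P unfolding Pext_def by blast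
      then show "\<nu>1 = \<mu> \<or> \<nu>2 = \<mu>" using inj_onD[OF inj _ n1 \<mu>] inj_onD[OF inj _ n2 \<mu>] by blast
    qed
  next
    assume P: "Pext \<mu>"
    show "Pext (\<Phi> \<mu>)" unfolding Pext_def
    proof (intro ballI impI)
      fix \<nu>1 \<nu>2 assume n1: "\<nu>1 \<in> W1" and n2: "\<nu>2 \<in> W1"
        and le: "W1_dist \<nu>1 (\<Phi> \<mu>) + W1_dist (\<Phi> \<mu>) \<nu>2 \<le> W1_dist \<nu>1 \<nu>2"
      obtain m1 where m1: "m1 \<in> W1" "\<nu>1 = \<Phi> m1" using n1 img by (metis imageE)
      obtain m2 where m2: "m2 \<in> W1" "\<nu>2 = \<Phi> m2" using n2 img by (metis imageE)
      have "W1_dist m1 \<mu> + W1_dist \<mu> m2 \<le> W1_dist m1 m2"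
        using le dp[OF m1(1) \<mu>] dp[OF \<mu> m2(1)] dp[OF m1(1) m2(1)] m1(2) m2(2) by simp
      then have "m1 = \<mu> \<or> m2 = \<mu>" using P m1(1) m2(1) unfolding Pext_def by blast
      then show "\<nu>1 = \<Phi> \<mu> \<or> \<nu>2 = \<Phi> \<mu>" using m1 m2 by auto
    qed
  qed
qed

lemma W1_dist_dirac_dirac: "W1_dist (return borel x) (return borel (y::'a::polish_space)) = ennreal (dist x y)"
  using W1_dist_dirac[OF dirac_W1, of x y] by (simp add: nn_integral_return)

lemma L_lemma:
  fixes M N :: "'a::polish_space measure"
  assumes st: "\<And>x y z::'a. z \<noteq> x \<Longrightarrow> z \<noteq> y \<Longrightarrow> dist x y < dist x z + dist z y"
    and M: "M \<in> W1" and N: "N \<in> W1" and zb: "z \<noteq> b"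
    and le: "W1_dist M N \<le> ennreal ((\<integral>x. dist b x \<partial>M) - (\<integral>x. dist b x \<partial>N))"
  shows "emeasure N {z} \<le> emeasure M {z}"
proof (rule ccontr)
  assume "\<not> emeasure N {z} \<le> emeasure M {z}"
  then have lt0: "emeasure M {z} < emeasure N {z}" by simp
  have sM: "sets M = sets borel" and pM: "prob_space M" and spM: "space M = UNIV" using W1_D[OF M] by auto
  have sN: "sets N = sets borel" and pN: "prob_space N" and spN: "space N = UNIV" using W1_D[OF N] by auto
  interpret M: prob_space M by (rule pM)
  interpret N: prob_space N by (rule pN)
  have lt: "measure M {z} < measure N {z}" using lt0 by (simp add: M.emeasure_eq_measure N.emeasure_eq_measure ennreal_less_iff)
  define r where "r = (\<integral>x. dist b x \<partial>M) - (\<integral>x. dist b x \<partial>N)"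
  have lipf: "\<bar>(- dist b x) - (- dist b y)\<bar> \<le> dist x y" for x y
  proof -
    have "dist b x \<le> dist b y + dist x y" using dist_triangle[of b x y] by (simp add: dist_commute)
    moreover have "dist b y \<le> dist b x + dist x y" using dist_triangle[of b y x] by (simp add: dist_commute)
    ultimately show ?thesis unfolding abs_le_iff by linarith
  qed
  have r0: "0 \<le> r"
  proof (rule ccontr)
    assume nr: "\<not> 0 \<le> r"
    have "ennreal ((\<integral>x. - dist b x \<partial>M) - (\<integral>x. - dist b x \<partial>N)) \<le> W1_dist M N"
      by (rule W1_lip[OF M N lipf])
    also have "\<dots> \<le> ennreal r" using le unfolding r_def .
    also have "\<dots> = 0" using nr by (simp add: ennreal_neg)
    finally have "ennreal (- r) \<le> 0" unfolding r_def by simp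
    then show False using nr by simp
  qed
  define g where "g w = dist w z + dist z b - dist w b" for w
  define U where "U k = {w. g w < 1 / Suc k}" for k
  have gc: "continuous_on UNIV g" unfolding g_def by (intro continuous_intros)
  have Uo: "open (U k)" for k unfolding U_def
    by (rule open_Collect_less[OF gc continuous_on_const])
  have Us: "U k \<in> sets M" for k using Uo[of k] sM by simp
  have dec: "decseq U" unfolding U_def decseq_def
    by (auto simp: frac_le order_less_le_trans)
  have gnn: "0 \<le> g w" for w unfolding g_def using dist_triangle[of w b z] by simp
  have inter: "(\<Inter>k. U k) = {z}"
  proof
    show "{z} \<subseteq> (\<Inter>k. U k)" by (auto simp: U_def g_def)
    show "(\<Inter>k. U k) \<subseteq> {z}"
    proof
      fix w assume w: "w \<in> (\<Inter>k. U k)"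
      have "g w \<le> 0"
      proof (rule ccontr)
        assume "\<not> g w \<le> 0"
        then obtain k where "inverse (real (Suc k)) < g w" using reals_Archimedean[of "g w"] by auto
        moreover have "g w < 1 / Suc k" using w by (auto simp: U_def)
        ultimately show False by (simp add: inverse_eq_divide)
      qed
      then have "g w = 0" using gnn[of w] by simp
      then show "w \<in> {z}"
        using st[of z w b] zb unfolding g_def by (cases "z = w") auto
    qed
  qed
  have "(\<lambda>k. measure M (U k)) \<longlonglongrightarrow> measure M (\<Inter>k. U k)"
    by (rule M.finite_Lim_measure_decseq) (use Us dec in auto)
  then have "(\<lambda>k. measure M (U k)) \<longlonglongrightarrow> measure M {z}" using inter by simp
  then have "eventually (\<lambda>k. measure M (U k) < measure N {z}) sequentially"
    using lt by (rule order_tendstoD(2))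
  then obtain k where k: "measure M (U k) < measure N {z}" by (auto simp: eventually_sequentially)
  define e where "e = 1 / real (Suc k)"
  have e0: "0 < e" unfolding e_def by simp
  define gam where "gam = measure N {z} - measure M (U k)"
  have gam0: "0 < gam" using k unfolding gam_def by simp
  have "ennreal r < ennreal (r + e * gam)" using e0 gam0 r0 by (simp add: ennreal_less_iff)
  with le have "W1_dist M N < ennreal (r + e * gam)" unfolding r_def[symmetric] by (rule order.strict_trans1)
  then obtain \<pi> where \<pi>: "\<pi> \<in> couplings M N"
    and c\<pi>: "(\<integral>\<^sup>+p. ennreal (dist (fst p) (snd p)) \<partial>\<pi>) < ennreal (r + e * gam)"
    unfolding W1_dist_def by (auto simp: INF_less_iff)
  have sp: "sets \<pi> = sets borel" "prob_space \<pi>" "space \<pi> = UNIV" using coupD[OF \<pi>] by auto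
  interpret P: prob_space \<pi> by (rule sp(2))
  have cost: "(\<integral>p. dist (fst p) (snd p) \<partial>\<pi>) < r + e * gam"
    using c\<pi> coup_cost_nn[OF \<pi> M N] by (simp add: ennreal_less_iff)
  define G where "G p = dist (fst p) (snd p) + dist b (snd p) - dist b (fst p)" for p :: "'a \<times> 'a"
  have m: "(\<lambda>y. dist b y) \<in> borel_measurable borel" by measurable
  have i1: "integrable \<pi> (\<lambda>p. dist b (fst p))" using coup_int_fst(2)[OF \<pi> m] W1_int[OF M] by simp
  have i2: "integrable \<pi> (\<lambda>p. dist b (snd p))" using coup_int_snd(2)[OF \<pi> m] W1_int[OF N] by simp
  have i3: "integrable \<pi> (\<lambda>p. dist (fst p) (snd p))" by (rule coup_cost_int[OF \<pi> M N])
  have iG: "integrable \<pi> G" unfolding G_def using i1 i2 i3 by auto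
  have intG: "(\<integral>p. G p \<partial>\<pi>) = (\<integral>p. dist (fst p) (snd p) \<partial>\<pi>) - r"
    unfolding G_def r_def using coup_int_fst(1)[OF \<pi> m] coup_int_snd(1)[OF \<pi> m] i1 i2 i3 by simp
  have Gnn: "0 \<le> G p" for p unfolding G_def
    using dist_triangle[of b "fst p" "snd p"] by (simp add: dist_commute)
  have mG: "G \<in> borel_measurable \<pi>" using iG by auto
  have Gset: "{p \<in> space \<pi>. e \<le> G p} \<in> sets \<pi>" using mG by measurable
  have markov: "measure \<pi> {p \<in> space \<pi>. e \<le> G p} \<le> (\<integral>p. G p \<partial>\<pi>) / e"
    by (rule integral_Markov_inequality_measure[OF iG Gset]) (use Gnn e0 in auto)
  also have "\<dots> < gam" using cost intG e0 by (simp add: divide_less_eq mult.commute)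
  finally have mk: "measure \<pi> {p \<in> space \<pi>. e \<le> G p} < gam" .
  have mf: "fst \<in> measurable \<pi> borel" and ms: "snd \<in> measurable \<pi> borel" using coup_meas[OF \<pi>] by auto
  have Uk: "U k \<in> sets borel" using Us sM by simp
  have zs: "{z} \<in> sets (borel::'a measure)" by simp
  have A1: "fst -` U k \<in> sets \<pi>" using measurable_sets[OF mf Uk] sp(3) by simp
  have A2: "snd -` {z} \<in> sets \<pi>" using measurable_sets[OF ms zs] sp(3) by simp
  have eN: "measure N {z} = measure \<pi> (snd -` {z})"
  proof -
    have "emeasure N {z} = emeasure (distr \<pi> borel snd) {z}" using coupD(4)[OF \<pi>] by simp
    also have "\<dots> = emeasure \<pi> (snd -` {z})" using emeasure_distr[OF ms zs] sp(3) by simp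
    finally show ?thesis by (simp add: measure_def)
  qed
  have eM: "measure M (U k) = measure \<pi> (fst -` U k)"
  proof -
    have "emeasure M (U k) = emeasure (distr \<pi> borel fst) (U k)" using coupD(3)[OF \<pi>] by simp
    also have "\<dots> = emeasure \<pi> (fst -` U k)" using emeasure_distr[OF mf Uk] sp(3) by simp
    finally show ?thesis by (simp add: measure_def)
  qed
  have sub: "snd -` {z} \<subseteq> (fst -` U k) \<union> {p \<in> space \<pi>. e \<le> G p}"
  proof
    fix p :: "'a \<times> 'a" assume p: "p \<in> snd -` {z}"
    show "p \<in> (fst -` U k) \<union> {p \<in> space \<pi>. e \<le> G p}"
    proof (cases "fst p \<in> U k")
      case False
      then have "e \<le> g (fst p)" unfolding U_def e_def by simp
      moreover have "G p = g (fst p)" using p unfolding G_def g_def by (simp add: dist_commute)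
      ultimately show ?thesis using sp(3) by simp
    qed simp
  qed
  have "measure \<pi> (snd -` {z}) \<le> measure \<pi> ((fst -` U k) \<union> {p \<in> space \<pi>. e \<le> G p})"
    by (rule P.finite_measure_mono[OF sub]) (use A1 Gset in auto)
  also have "\<dots> \<le> measure \<pi> (fst -` U k) + measure \<pi> {p \<in> space \<pi>. e \<le> G p}"
    by (rule measure_subadditive[OF A1 Gset]) auto
  finally have "measure N {z} < measure M (U k) + gam" using eN eM mk by linarith
  then show False unfolding gam_def by simp
qed

lemma W1_distr:
  fixes \<mu> :: "'a::polish_space measure" and g :: "'a \<Rightarrow> 'a"
  assumes \<mu>: "\<mu> \<in> W1" and g: "g \<in> borel_measurable borel"
    and bd: "\<And>w. dist (g w) y0 \<le> dist w x0 + C"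
  shows "distr \<mu> borel g \<in> W1"
proof -
  have s: "sets \<mu> = sets borel" and ps: "prob_space \<mu>" using W1_D[OF \<mu>] by auto
  interpret prob_space \<mu> by (rule ps)
  have gm: "g \<in> measurable \<mu> borel" by (rule meas_cong_borel[OF s g])
  have m1: "(\<lambda>y. ennreal (dist y y0)) \<in> borel_measurable borel" by measurable
  have m2: "(\<lambda>w. ennreal (dist w x0)) \<in> borel_measurable \<mu>" by (rule meas_cong_borel[OF s]) measurable
  have "(\<integral>\<^sup>+y. ennreal (dist y y0) \<partial>distr \<mu> borel g) = (\<integral>\<^sup>+w. ennreal (dist (g w) y0) \<partial>\<mu>)"
    by (rule nn_integral_distr[OF gm]) (use m1 in simp)
  also have "\<dots> \<le> (\<integral>\<^sup>+w. ennreal (dist w x0) + ennreal (max 0 C) \<partial>\<mu>)"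
  proof (rule nn_integral_mono)
    fix w
    have "dist (g w) y0 \<le> dist w x0 + max 0 C" using bd[of w] by linarith
    then have "ennreal (dist (g w) y0) \<le> ennreal (dist w x0 + max 0 C)" by (rule ennreal_leI)
    then show "ennreal (dist (g w) y0) \<le> ennreal (dist w x0) + ennreal (max 0 C)"
      by (simp add: ennreal_plus)
  qed
  also have "\<dots> = (\<integral>\<^sup>+w. ennreal (dist w x0) \<partial>\<mu>) + ennreal (max 0 C)"
    using m2 emeasure_space_1 by (simp add: nn_integral_add)
  also have "\<dots> < \<infinity>" using W1_nn_moment[OF \<mu>, of x0] by simp
  finally have "(\<integral>\<^sup>+y. ennreal (dist y y0) \<partial>distr \<mu> borel g) < \<infinity>" .
  then show ?thesis unfolding W1_def using prob_space_distr[OF gm] by auto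
qed

lemma map_coupling:
  fixes \<mu> :: "'a::polish_space measure" and g :: "'a \<Rightarrow> 'a"
  assumes \<mu>: "\<mu> \<in> W1" and g: "g \<in> borel_measurable borel"
  shows "distr \<mu> borel (\<lambda>w. (w, g w)) \<in> couplings \<mu> (distr \<mu> borel g)"
    "(\<integral>\<^sup>+p. ennreal (dist (fst p) (snd p)) \<partial>distr \<mu> borel (\<lambda>w. (w, g w))) = (\<integral>\<^sup>+w. ennreal (dist w (g w)) \<partial>\<mu>)"
proof -
  have s: "sets \<mu> = sets borel" and ps: "prob_space \<mu>" using W1_D[OF \<mu>] by auto
  have gm: "g \<in> measurable \<mu> borel" by (rule meas_cong_borel[OF s g])
  have pc: "continuous_on UNIV (\<lambda>w::'a. w)" by (intro continuous_intros)
  have pm: "(\<lambda>w. (w, g w)) \<in> measurable \<mu> borel"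
  proof -
    have "(\<lambda>w. (w, g w)) \<in> measurable \<mu> (borel \<Otimes>\<^sub>M borel)"
      using gm s by (intro measurable_Pair) (auto simp: meas_cong_borel)
    then show ?thesis by (metis borel_prod)
  qed
  have mf: "fst \<in> measurable (borel::('a\<times>'a) measure) borel"
    by (metis borel_prod measurable_fst)
  have msd: "snd \<in> measurable (borel::('a\<times>'a) measure) borel"
    using measurable_snd[of "borel::'a measure" "borel::'a measure"] by (subst (asm) borel_prod)
  have "distr (distr \<mu> borel (\<lambda>w. (w, g w))) borel fst = distr \<mu> borel (fst \<circ> (\<lambda>w. (w, g w)))"
    by (rule distr_distr[OF mf pm])
  also have "\<dots> = distr \<mu> borel (\<lambda>w. w)" by (simp add: comp_def)
  also have "\<dots> = \<mu>" using distr_id2[OF s[symmetric]] by simp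
  finally have f: "distr (distr \<mu> borel (\<lambda>w. (w, g w))) borel fst = \<mu>" .
  have "distr (distr \<mu> borel (\<lambda>w. (w, g w))) borel snd = distr \<mu> borel (snd \<circ> (\<lambda>w. (w, g w)))"
    by (rule distr_distr[OF msd pm])
  then have sn: "distr (distr \<mu> borel (\<lambda>w. (w, g w))) borel snd = distr \<mu> borel g" by (simp add: comp_def)
  show "distr \<mu> borel (\<lambda>w. (w, g w)) \<in> couplings \<mu> (distr \<mu> borel g)"
    unfolding couplings_def using f sn prob_space.prob_space_distr[OF ps pm] by auto
  have "(\<lambda>p::'a\<times>'a. ennreal (dist (fst p) (snd p))) \<in> borel_measurable borel"
    by (rule meas_cong_borel2[OF refl]) measurable
  then show "(\<integral>\<^sup>+p. ennreal (dist (fst p) (snd p)) \<partial>distr \<mu> borel (\<lambda>w. (w, g w))) = (\<integral>\<^sup>+w. ennreal (dist w (g w)) \<partial>\<mu>)"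
    by (subst nn_integral_distr[OF pm]) auto
qed

lemma fin_integral:
  fixes \<eta> :: "'a::polish_space measure" and f :: "'a \<Rightarrow> real"
  assumes \<eta>: "\<eta> \<in> W1" and S: "finite S" "emeasure \<eta> (-S) = 0" and f: "f \<in> borel_measurable borel"
  shows "(\<integral>w. f w \<partial>\<eta>) = (\<Sum>z\<in>S. f z * measure \<eta> {z})"
proof -
  have s: "sets \<eta> = sets borel" and ps: "prob_space \<eta>" and sp: "space \<eta> = UNIV" using W1_D[OF \<eta>] by auto
  interpret prob_space \<eta> by (rule ps)
  have cS: "-S \<in> sets \<eta>" using S(1) s by (simp add: finite_imp_closed borel_closed)
  have "AE w in \<eta>. w \<notin> -S" by (rule AE_not_in) (use cS S(2) in auto)
  then have "AE w in \<eta>. f w = (\<Sum>z\<in>S. f z * indicator {z} w)"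
  proof eventually_elim
    case (elim w)
    then have "w \<in> S" by simp
    then have "(\<Sum>z\<in>S. f z * indicator {z} w) = (\<Sum>z\<in>{w}. f z * indicator {z} w)"
      using S(1) by (intro sum.mono_neutral_right) (auto simp: indicator_def)
    then show ?case by simp
  qed
  then have "(\<integral>w. f w \<partial>\<eta>) = (\<integral>w. (\<Sum>z\<in>S. f z * indicator {z} w) \<partial>\<eta>)"
    by (intro integral_cong_AE) (auto intro!: meas_cong_borel[OF s] f borel_measurable_sum
          borel_measurable_times borel_measurable_const borel_measurable_indicator)
  also have "\<dots> = (\<Sum>z\<in>S. (\<integral>w. f z * indicator {z} w \<partial>\<eta>))"
    by (rule Bochner_Integration.integral_sum) (auto intro!: integrable_mult_right integrable_real_indicator simp: s emeasure_eq_measure)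
  also have "\<dots> = (\<Sum>z\<in>S. f z * measure \<eta> {z})" by (simp add: sp)
  finally show ?thesis .
qed

lemma fin_eq:
  fixes M N :: "'a::polish_space measure"
  assumes M: "M \<in> W1" and N: "N \<in> W1" and S: "finite S" "emeasure M (-S) = 0"
    and le: "\<And>z. z \<in> S \<Longrightarrow> emeasure M {z} \<le> emeasure N {z}"
  shows "M = N"
proof -
  have sM: "sets M = sets borel" and pM: "prob_space M" and spM: "space M = UNIV" using W1_D[OF M] by auto
  have sN: "sets N = sets borel" and pN: "prob_space N" and spN: "space N = UNIV" using W1_D[OF N] by auto
  interpret M: prob_space M by (rule pM)
  interpret N: prob_space N by (rule pN)
  have leR: "measure M {z} \<le> measure N {z}" if "z \<in> S" for z
    using le[OF that] by (simp add: M.emeasure_eq_measure N.emeasure_eq_measure)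
  have cS: "-S \<in> sets borel" using S(1) by (simp add: finite_imp_closed borel_closed)
  have Ss: "S \<in> sets borel" using S(1) by (simp add: finite_imp_closed borel_closed)
  have MS: "measure M S = 1"
  proof -
    have "measure M (space M - (-S)) = 1 - measure M (-S)" using M.prob_compl[of "-S"] cS sM by simp
    moreover have "measure M (-S) = 0" using S(2) by (simp add: measure_def)
    ultimately show ?thesis using spM by (simp add: Compl_eq_Diff_UNIV[symmetric])
  qed
  have sumM: "measure M S = (\<Sum>z\<in>S. measure M {z})"
    by (rule measure_eq_sum_singleton[OF S(1)]) (auto simp: sM)
  have sumN: "measure N S = (\<Sum>z\<in>S. measure N {z})"
    by (rule measure_eq_sum_singleton[OF S(1)]) (auto simp: sN)
  have NS: "measure N S \<le> 1" by (rule N.prob_le_1)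
  have eqz: "measure M {z} = measure N {z}" if z: "z \<in> S" for z
  proof (rule ccontr)
    assume "measure M {z} \<noteq> measure N {z}"
    then have "measure M {z} < measure N {z}" using leR[OF z] by simp
    then have "(\<Sum>z\<in>S. measure M {z}) < (\<Sum>z\<in>S. measure N {z})"
      using S(1) z leR by (intro sum_strict_mono_ex1) auto
    then show False using sumM sumN MS NS by simp
  qed
  have "(\<Sum>z\<in>S. measure M {z}) = (\<Sum>z\<in>S. measure N {z})" using eqz by simp
  then have NS1: "measure N S = 1" using sumM sumN MS by simp
  have N0: "measure N (-S) = 0"
  proof -
    have "measure N (space N - S) = 1 - measure N S" using N.prob_compl[of S] Ss sN by simp
    then show ?thesis using NS1 spN by (simp add: Compl_eq_Diff_UNIV)
  qed
  have M0: "measure M (-S) = 0" using S(2) by (simp add: measure_def)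
  show ?thesis
  proof (rule measure_eqI)
    show "sets M = sets N" using sM sN by simp
    fix B assume "B \<in> sets M"
    then have B: "B \<in> sets borel" using sM by simp
    have BS: "B \<inter> S \<in> sets borel" "B - S \<in> sets borel" using B Ss by auto
    have fBS: "finite (B \<inter> S)" using S(1) by simp
    have decM: "measure M B = measure M (B \<inter> S) + measure M (B - S)"
      using M.finite_measure_Union[of "B \<inter> S" "B - S"] BS sM by (simp add: Int_Diff_Un Int_Diff_disjoint)
    have decN: "measure N B = measure N (B \<inter> S) + measure N (B - S)"
      using N.finite_measure_Union[of "B \<inter> S" "B - S"] BS sN by (simp add: Int_Diff_Un Int_Diff_disjoint)
    have "measure M (B - S) \<le> measure M (-S)" using cS sM by (intro M.finite_measure_mono) auto
    then have m1: "measure M (B - S) = 0" using M0 measure_nonneg[of M "B - S"] by linarith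
    have "measure N (B - S) \<le> measure N (-S)" using cS sN by (intro N.finite_measure_mono) auto
    then have m2: "measure N (B - S) = 0" using N0 measure_nonneg[of N "B - S"] by linarith
    have "measure M (B \<inter> S) = (\<Sum>z\<in>B \<inter> S. measure M {z})"
      by (rule measure_eq_sum_singleton[OF fBS]) (auto simp: sM)
    also have "\<dots> = (\<Sum>z\<in>B \<inter> S. measure N {z})" using eqz by simp
    also have "\<dots> = measure N (B \<inter> S)"
      by (rule measure_eq_sum_singleton[OF fBS, symmetric]) (auto simp: sN)
    finally have "measure M B = measure N B" using decM decN m1 m2 by simp
    then show "emeasure M B = emeasure N B" by (simp add: M.emeasure_eq_measure N.emeasure_eq_measure)
  qed
qed

locale wiso =
  fixes \<Phi> :: "'a::polish_space measure \<Rightarrow> 'a measure"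
  assumes st: "\<And>x y z::'a. z \<noteq> x \<Longrightarrow> z \<noteq> y \<Longrightarrow> dist x y < dist x z + dist z y"
    and iso: "W1_isometry \<Phi>"
begin

lemma Phi_W1: "\<mu> \<in> W1 \<Longrightarrow> \<Phi> \<mu> \<in> W1"
  using iso unfolding W1_isometry_def bij_betw_def by auto

lemma Phi_dist: "\<mu> \<in> W1 \<Longrightarrow> \<nu> \<in> W1 \<Longrightarrow> W1_dist (\<Phi> \<mu>) (\<Phi> \<nu>) = W1_dist \<mu> \<nu>"
  using iso unfolding W1_isometry_def by auto

definition psi :: "'a \<Rightarrow> 'a" where
  "psi x = (SOME y. \<Phi> (return borel x) = return borel y)"

lemma Phi_dirac: "\<Phi> (return borel x) = return borel (psi x)"
proof -
  have "Pext (return borel x)" by (rule dirac_Pext[OF st])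
  then have "Pext (\<Phi> (return borel x))" using iso_Pext[OF iso dirac_W1] by simp
  then have "\<exists>y. \<Phi> (return borel x) = return borel y"
    using Pext_iff_dirac[OF st Phi_W1[OF dirac_W1]] by simp
  then show ?thesis unfolding psi_def by (rule someI_ex)
qed

lemma psi_dist: "dist (psi x) (psi y) = dist x y"
proof -
  have "ennreal (dist (psi x) (psi y)) = W1_dist (\<Phi> (return borel x)) (\<Phi> (return borel y))"
    by (simp add: Phi_dirac W1_dist_dirac_dirac)
  also have "\<dots> = ennreal (dist x y)" by (simp add: Phi_dist dirac_W1 W1_dist_dirac_dirac)
  finally show ?thesis by simp
qed

lemma psi_inj: "inj psi"
  by (rule injI) (metis dist_eq_0_iff psi_dist)

lemma psi_surj: "surj psi"
proof -
  have img: "\<Phi> ` W1 = W1" using iso unfolding W1_isometry_def bij_betw_def by auto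
  have "y \<in> range psi" for y
  proof -
    obtain \<mu> where \<mu>: "\<mu> \<in> W1" "\<Phi> \<mu> = return borel y" using img dirac_W1[of y] by (metis imageE)
    have "Pext (\<Phi> \<mu>)" using \<mu>(2) dirac_Pext[OF st] by simp
    then have "Pext \<mu>" using iso_Pext[OF iso \<mu>(1)] by simp
    then obtain x where x: "\<mu> = return borel x" using Pext_iff_dirac[OF st \<mu>(1)] by blast
    then have "return borel (psi x) = return borel y" using \<mu>(2) Phi_dirac by simp
    then have "psi x = y" by (rule dirac_inj)
    then show ?thesis by blast
  qed
  then show ?thesis by blast
qed

lemma psi_isometry: "isometry psi"
  unfolding isometry_def using psi_inj psi_surj psi_dist by (simp add: bij_def)

lemma psi_meas: "psi \<in> borel_measurable borel"
proof -
  have "lipschitz_on 1 UNIV psi" by (rule lipschitz_onI) (auto simp: psi_dist)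
  then show ?thesis by (intro borel_measurable_continuous_onI lipschitz_on_continuous_on)
qed

lemma Psi_W1:
  assumes "\<mu> \<in> W1" shows "distr \<mu> borel psi \<in> W1"
proof -
  fix x0 :: 'a
  have "dist (psi w) (psi x0) \<le> dist w x0 + 0" for w using psi_dist[of w x0] by simp
  then show ?thesis by (rule W1_distr[OF assms psi_meas])
qed

lemma Psi_emeasure:
  assumes "\<mu> \<in> W1" "B \<in> sets borel"
  shows "emeasure (distr \<mu> borel psi) B = emeasure \<mu> (psi -` B)"
proof -
  have s: "sets \<mu> = sets borel" and sp: "space \<mu> = UNIV" using W1_D[OF assms(1)] by auto
  show ?thesis using emeasure_distr[OF meas_cong_borel[OF s psi_meas] assms(2)] sp by simp
qed

lemma Psi_single:
  assumes "\<mu> \<in> W1"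
  shows "emeasure (distr \<mu> borel psi) {psi z} = emeasure \<mu> {z}"
proof -
  have "psi -` {psi z} = {z}" using psi_inj by (auto dest: injD)
  then show ?thesis using Psi_emeasure[OF assms, of "{psi z}"] by simp
qed

lemma Phi_pot:
  assumes "\<nu> \<in> W1"
  shows "(\<integral>y. dist (psi b) y \<partial>\<Phi> \<nu>) = (\<integral>y. dist b y \<partial>\<nu>)"
proof -
  have "ennreal (\<integral>y. dist (psi b) y \<partial>\<Phi> \<nu>) = W1_dist (return borel (psi b)) (\<Phi> \<nu>)"
    using W1_dist_dirac_real(1)[OF Phi_W1[OF assms]] by simp
  also have "\<dots> = W1_dist (\<Phi> (return borel b)) (\<Phi> \<nu>)" by (simp add: Phi_dirac)
  also have "\<dots> = W1_dist (return borel b) \<nu>" by (rule Phi_dist[OF dirac_W1 assms])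
  also have "\<dots> = ennreal (\<integral>y. dist b y \<partial>\<nu>)" by (rule W1_dist_dirac_real(1)[OF assms])
  finally show ?thesis by (simp add: integral_nonneg)
qed

end

definition fsupp :: "'a::polish_space measure \<Rightarrow> 'a set \<Rightarrow> bool" where
  "fsupp \<eta> S \<longleftrightarrow> \<eta> \<in> W1 \<and> finite S \<and> emeasure \<eta> (-S) = 0 \<and> (\<forall>z\<in>S. emeasure \<eta> {z} > 0)"

lemma two_elems:
  assumes "2 \<le> card T"
  obtains a b where "a \<in> T" "b \<in> T" "a \<noteq> b"
proof -
  have fT: "finite T"
  proof (rule ccontr)
    assume "infinite T" then have "card T = 0" by simp
    with assms show False by simp
  qed
  have "T \<noteq> {}" using assms by auto
  then obtain a where a: "a \<in> T" by blast
  have "card (T - {a}) \<ge> 1" using assms a fT by (simp add: card_Diff_singleton)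
  then have "T - {a} \<noteq> {}"
  proof (intro notI)
    assume h: "T - {a} = {}"
    show False using \<open>card (T - {a}) \<ge> 1\<close> unfolding h by simp
  qed
  then obtain b where "b \<in> T - {a}" by blast
  then show thesis using that[of a b] a by auto
qed

lemma if_meas: "(\<lambda>w::'a::polish_space. if w = a then b else w) \<in> borel_measurable borel"
proof -
  have "(\<lambda>w::'a. if w \<in> {a} then b else w) \<in> borel_measurable borel"
    by (rule measurable_If_set) auto
  then show ?thesis by simp
qed

context wiso
begin

lemma base2:
  assumes \<eta>: "\<eta> \<in> W1" and S: "emeasure \<eta> (-{a,b}) = 0" and ab: "a \<noteq> b"
  shows "\<Phi> \<eta> = distr \<eta> borel psi"
proof -
  let ?N = "\<Phi> \<eta>"
  have N: "?N \<in> W1" by (rule Phi_W1[OF \<eta>])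
  have fS: "finite {a,b}" by simp
  have s: "sets \<eta> = sets borel" and ps: "prob_space \<eta>" and sp: "space \<eta> = UNIV" using W1_D[OF \<eta>] by auto
  have sN: "sets ?N = sets borel" and psN: "prob_space ?N" and spN: "space ?N = UNIV" using W1_D[OF N] by auto
  interpret E: prob_space \<eta> by (rule ps)
  interpret NN: prob_space ?N by (rule psN)
  define A where "A = psi a"
  define B where "B = psi b"
  have AB: "A \<noteq> B" using psi_inj ab unfolding A_def B_def by (auto dest: injD)
  define D where "D = dist a b"
  have D0: "D > 0" using ab unfolding D_def by simp
  have dAB: "dist A B = D" unfolding A_def B_def D_def by (rule psi_dist)
  have ma: "(\<lambda>w. dist a w) \<in> borel_measurable borel" by measurable
  have mb: "(\<lambda>w. dist b w) \<in> borel_measurable borel" by measurable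
  have ua: "(\<integral>w. dist a w \<partial>\<eta>) = D * measure \<eta> {b}"
    using fin_integral[OF \<eta> fS S ma] ab unfolding D_def by simp
  have ub: "(\<integral>w. dist b w \<partial>\<eta>) = D * measure \<eta> {a}"
    using fin_integral[OF \<eta> fS S mb] ab unfolding D_def by (simp add: dist_commute)
  have sum1: "measure \<eta> {a} + measure \<eta> {b} = 1"
  proof -
    have "measure \<eta> (space \<eta> - (-{a,b})) = 1 - measure \<eta> (-{a,b})"
      using E.prob_compl[of "-{a,b}"] s by (simp add: borel_closed finite_imp_closed)
    moreover have "measure \<eta> (-{a,b}) = 0" using S by (simp add: measure_def)
    ultimately have "measure \<eta> {a,b} = 1" using sp by (simp add: Compl_eq_Diff_UNIV[symmetric])
    moreover have "measure \<eta> {a,b} = measure \<eta> {a} + measure \<eta> {b}"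
      using measure_eq_sum_singleton[OF fS, of \<eta>] ab s by simp
    ultimately show ?thesis by simp
  qed
  have uNa: "(\<integral>w. dist A w \<partial>?N) = D * measure \<eta> {b}" using Phi_pot[OF \<eta>, of a] ua unfolding A_def by simp
  have uNb: "(\<integral>w. dist B w \<partial>?N) = D * measure \<eta> {a}" using Phi_pot[OF \<eta>, of b] ub unfolding B_def by simp
  define h where "h w = dist A w + dist B w - D" for w
  have ih: "integrable ?N h" unfolding h_def using W1_int[OF N] by auto
  have "(\<integral>w. h w \<partial>?N) = D * measure \<eta> {b} + D * measure \<eta> {a} - D"
    unfolding h_def using W1_int[OF N] uNa uNb NN.prob_space spN by simp
  also have "\<dots> = D * (measure \<eta> {a} + measure \<eta> {b}) - D" by (simp add: algebra_simps)
  finally have ih0: "(\<integral>w. h w \<partial>?N) = 0" using sum1 by simp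
  have hnn: "0 \<le> h w" for w unfolding h_def using dist_triangle[of A B w] dAB by (simp add: dist_commute)
  have "AE w in ?N. h w = 0" using integral_nonneg_eq_0_iff_AE[OF ih] ih0 hnn by simp
  then have AE: "AE w in ?N. w \<in> {A,B}"
  proof eventually_elim
    case (elim w)
    show ?case
    proof (rule ccontr)
      assume "w \<notin> {A,B}"
      then have "dist A B < dist A w + dist w B" using st[of w A B] by auto
      then show False using elim dAB unfolding h_def by (simp add: dist_commute)
    qed
  qed
  have cs: "-{A,B} \<in> sets ?N" using sN by (simp add: borel_closed finite_imp_closed)
  have "{w \<in> space ?N. w \<notin> {A,B}} = -{A,B}" using spN by auto
  then have N0: "emeasure ?N (-{A,B}) = 0" using AE_iff_measurable[OF cs, of "\<lambda>w. w \<in> {A,B}"] AE by simp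
  have fS2: "finite {A,B}" by simp
  have mA: "(\<lambda>w. dist A w) \<in> borel_measurable borel" by measurable
  have mB: "(\<lambda>w. dist B w) \<in> borel_measurable borel" by measurable
  have "(\<integral>w. dist A w \<partial>?N) = D * measure ?N {B}"
    using fin_integral[OF N fS2 N0 mA] AB dAB by simp
  then have eB: "measure ?N {B} = measure \<eta> {b}" using uNa D0 by simp
  have "(\<integral>w. dist B w \<partial>?N) = D * measure ?N {A}"
    using fin_integral[OF N fS2 N0 mB] AB dAB by (simp add: dist_commute)
  then have eA: "measure ?N {A} = measure \<eta> {a}" using uNb D0 by simp
  have "?N = distr \<eta> borel psi"
  proof (rule fin_eq[OF N Psi_W1[OF \<eta>] fS2 N0])
    fix w assume "w \<in> {A,B}"
    then show "emeasure ?N {w} \<le> emeasure (distr \<eta> borel psi) {w}"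
      using eA eB Psi_single[OF \<eta>, of a] Psi_single[OF \<eta>, of b] unfolding A_def B_def
      by (auto simp: NN.emeasure_eq_measure E.emeasure_eq_measure)
  qed
  then show ?thesis .
qed

end

context wiso
begin

lemma step_key:
  assumes \<eta>W: "\<eta> \<in> W1" and fS: "finite S" and S0: "emeasure \<eta> (-S) = 0"
    and pos: "\<And>z. z \<in> S \<Longrightarrow> emeasure \<eta> {z} > 0"
    and z: "z \<in> S" and a: "a \<in> S" and b: "b \<in> S" and az: "a \<noteq> z" and bz: "b \<noteq> z" and ab: "a \<noteq> b"
    and IH: "\<And>\<xi>. fsupp \<xi> (S - {a}) \<Longrightarrow> \<Phi> \<xi> = distr \<xi> borel psi"
  shows "emeasure (distr \<eta> borel psi) {psi z} \<le> emeasure (\<Phi> \<eta>) {psi z}"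
proof -
  have s: "sets \<eta> = sets borel" and ps: "prob_space \<eta>" and sp: "space \<eta> = UNIV" using W1_D[OF \<eta>W] by auto
  interpret E: prob_space \<eta> by (rule ps)
  define g where "g w = (if w = a then b else w)" for w
  have gm: "g \<in> borel_measurable borel" unfolding g_def by (rule if_meas)
  have gmE: "g \<in> measurable \<eta> borel" by (rule meas_cong_borel[OF s gm])
  define \<xi> where "\<xi> = distr \<eta> borel g"
  have \<xi>W: "\<xi> \<in> W1" unfolding \<xi>_def
    by (rule W1_distr[OF \<eta>W gm, of b b 0]) (simp add: g_def)
  have \<xi>e: "emeasure \<xi> B = emeasure \<eta> (g -` B)" if "B \<in> sets borel" for B
    unfolding \<xi>_def using emeasure_distr[OF gmE that] sp by simp
  have cS: "-(S - {a}) \<in> sets borel" using fS by (simp add: borel_closed finite_imp_closed)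
  have "g -` (-(S - {a})) = -S" using a b ab unfolding g_def by (auto split: if_splits)
  then have \<xi>0: "emeasure \<xi> (-(S - {a})) = 0" using \<xi>e[OF cS] S0 by simp
  have \<xi>pos: "emeasure \<xi> {y} > 0" if y: "y \<in> S - {a}" for y
  proof -
    have ys: "{y} \<in> sets (borel::'a measure)" by simp
    have "emeasure \<eta> {y} \<le> emeasure \<eta> (g -` {y})"
      using y measurable_sets[OF gmE ys] sp by (intro emeasure_mono) (auto simp: g_def)
    then show ?thesis using \<xi>e[OF ys] pos[of y] y by simp
  qed
  have fs: "fsupp \<xi> (S - {a})" unfolding fsupp_def using \<xi>W fS \<xi>0 \<xi>pos by auto
  have Phi\<xi>: "\<Phi> \<xi> = distr \<xi> borel psi" by (rule IH[OF fs])
  have dle: "W1_dist \<eta> \<xi> \<le> ennreal (dist a b * measure \<eta> {a})"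
  proof -
    have "W1_dist \<eta> \<xi> \<le> (\<integral>\<^sup>+w. ennreal (dist w (g w)) \<partial>\<eta>)"
      using W1_dist_le[OF map_coupling(1)[OF \<eta>W gm]] map_coupling(2)[OF \<eta>W gm] unfolding \<xi>_def by simp
    also have "\<dots> = (\<integral>\<^sup>+w. ennreal (dist a b) * indicator {a} w \<partial>\<eta>)"
      by (intro nn_integral_cong) (auto simp: g_def indicator_def)
    also have "\<dots> = ennreal (dist a b) * emeasure \<eta> {a}"
      by (rule nn_integral_cmult_indicator) (simp add: s)
    also have "\<dots> = ennreal (dist a b * measure \<eta> {a})"
      by (simp add: E.emeasure_eq_measure ennreal_mult)
    finally show ?thesis .
  qed
  have mb: "(\<lambda>w. dist b w) \<in> borel_measurable borel" by measurable
  have i1: "integrable \<eta> (\<lambda>w. dist b w)" using W1_int[OF \<eta>W] by simp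
  have i2: "integrable \<eta> (\<lambda>w. dist b (g w))"
    using integrable_distr_eq[OF gmE mb] W1_int(2)[OF \<xi>W, of b] unfolding \<xi>_def by simp
  have u\<xi>: "(\<integral>w. dist b w \<partial>\<xi>) = (\<integral>w. dist b (g w) \<partial>\<eta>)"
    unfolding \<xi>_def by (rule integral_distr[OF gmE mb])
  have "(\<integral>w. dist b w \<partial>\<eta>) - (\<integral>w. dist b w \<partial>\<xi>) = (\<integral>w. dist b w - dist b (g w) \<partial>\<eta>)"
    using u\<xi> Bochner_Integration.integral_diff[OF i1 i2] by simp
  also have "\<dots> = (\<integral>w. dist a b * indicator {a} w \<partial>\<eta>)"
    by (intro Bochner_Integration.integral_cong) (auto simp: g_def indicator_def dist_commute)
  also have "\<dots> = dist a b * measure \<eta> {a}" using sp by simp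
  finally have udiff: "(\<integral>w. dist b w \<partial>\<eta>) - (\<integral>w. dist b w \<partial>\<xi>) = dist a b * measure \<eta> {a}" .
  have zb': "psi z \<noteq> psi b" using psi_inj bz by (auto dest: injD)
  have "W1_dist (\<Phi> \<eta>) (\<Phi> \<xi>) \<le> ennreal ((\<integral>x. dist (psi b) x \<partial>\<Phi> \<eta>) - (\<integral>x. dist (psi b) x \<partial>\<Phi> \<xi>))"
    using Phi_dist[OF \<eta>W \<xi>W] dle udiff Phi_pot[OF \<eta>W, of b] Phi_pot[OF \<xi>W, of b] by simp
  from L_lemma[OF st Phi_W1[OF \<eta>W] Phi_W1[OF \<xi>W] zb' this]
  have "emeasure (\<Phi> \<xi>) {psi z} \<le> emeasure (\<Phi> \<eta>) {psi z}" .
  moreover have "emeasure (\<Phi> \<xi>) {psi z} = emeasure (distr \<eta> borel psi) {psi z}"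
  proof -
    have zs: "{z} \<in> sets (borel::'a measure)" by simp
    have "g -` {z} = {z}" using az bz unfolding g_def by auto
    then have "emeasure \<xi> {z} = emeasure \<eta> {z}" using \<xi>e[OF zs] by simp
    then show ?thesis using Phi\<xi> Psi_single[OF \<xi>W, of z] Psi_single[OF \<eta>W, of z] by simp
  qed
  ultimately show ?thesis by simp
qed

lemma step:
  assumes \<eta>: "fsupp \<eta> S" and c3: "card S \<ge> 3"
    and IH: "\<And>\<xi> T. card T < card S \<Longrightarrow> fsupp \<xi> T \<Longrightarrow> \<Phi> \<xi> = distr \<xi> borel psi"
  shows "\<Phi> \<eta> = distr \<eta> borel psi"
proof -
  have \<eta>W: "\<eta> \<in> W1" and fS: "finite S" and S0: "emeasure \<eta> (-S) = 0"
    and pos: "\<And>z. z \<in> S \<Longrightarrow> emeasure \<eta> {z} > 0" using \<eta> unfolding fsupp_def by auto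
  have key: "emeasure (distr \<eta> borel psi) {w} \<le> emeasure (\<Phi> \<eta>) {w}" if w: "w \<in> psi ` S" for w
  proof -
    obtain z where z: "z \<in> S" "w = psi z" using w by blast
    have "card (S - {z}) \<ge> 2" using c3 z fS by (simp add: card_Diff_singleton)
    then obtain a b where ab: "a \<in> S - {z}" "b \<in> S - {z}" "a \<noteq> b" by (rule two_elems)
    have IH': "\<Phi> \<xi> = distr \<xi> borel psi" if "fsupp \<xi> (S - {a})" for \<xi>
      by (rule IH[OF _ that]) (use ab fS c3 in \<open>auto intro: card_Diff1_less\<close>)
    show ?thesis using step_key[OF \<eta>W fS S0 pos z(1), of a b] ab IH' z(2) by auto
  qed
  have fS': "finite (psi ` S)" using fS by simp
  have "psi -` (-(psi ` S)) = -S" using psi_inj by (auto dest: injD)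
  moreover have "-(psi ` S) \<in> sets borel" using fS' by (simp add: borel_closed finite_imp_closed)
  ultimately have P0: "emeasure (distr \<eta> borel psi) (-(psi ` S)) = 0"
    using Psi_emeasure[OF \<eta>W] S0 by simp
  have "distr \<eta> borel psi = \<Phi> \<eta>"
    by (rule fin_eq[OF Psi_W1[OF \<eta>W] Phi_W1[OF \<eta>W] fS' P0 key])
  then show ?thesis by simp
qed

lemma fin_main: "fsupp \<eta> S \<Longrightarrow> \<Phi> \<eta> = distr \<eta> borel psi"
proof (induction "card S" arbitrary: \<eta> S rule: less_induct)
  case less
  have \<eta>W: "\<eta> \<in> W1" and fS: "finite S" and S0: "emeasure \<eta> (-S) = 0"
    using less.prems unfolding fsupp_def by auto
  consider "card S = 0" | "card S = 1" | "card S = 2" | "card S \<ge> 3" by linarith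
  then show ?case
  proof cases
    case 1
    then have "S = {}" using fS by simp
    then have "emeasure \<eta> UNIV = 0" using S0 by simp
    moreover have "emeasure \<eta> UNIV = 1" using W1_D[OF \<eta>W] prob_space.emeasure_space_1 by metis
    ultimately show ?thesis by simp
  next
    case 2
    then obtain x where "S = {x}" by (rule card_1_singletonE)
    then have e: "\<eta> = return borel x" using compl_zero_dirac[OF \<eta>W] S0 by simp
    have "distr (return borel x) borel psi = return borel (psi x)"
      by (rule distr_return[OF psi_meas]) simp
    then show ?thesis using e Phi_dirac by simp
  next
    case 3
    then obtain a b where "S = {a,b}" "a \<noteq> b" by (metis card_2_iff)
    then show ?thesis using base2[OF \<eta>W] S0 by simp
  next
    case 4
    show ?thesis by (rule step[OF less.prems 4 less.hyps])
  qed
qed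

end

primrec Tq :: "(nat \<Rightarrow> 'a::metric_space) \<Rightarrow> real \<Rightarrow> nat \<Rightarrow> 'a \<Rightarrow> 'a" where
  "Tq c d 0 w = c 0"
| "Tq c d (Suc k) w = (if dist w (c k) < d then c k else Tq c d k w)"

lemma Tq_range: "Tq c d N w \<in> c ` {..N}"
  by (induction N) auto

lemma Tq_close: "(\<exists>k<N. dist w (c k) < d) \<Longrightarrow> dist w (Tq c d N w) < d"
  by (induction N) (auto simp: less_Suc_eq)

lemma Tq_far: "\<not> (\<exists>k<N. dist w (c k) < d) \<Longrightarrow> Tq c d N w = c 0"
  by (induction N) (auto simp: less_Suc_eq)

lemma Tq_meas: "Tq c d N \<in> borel_measurable (borel :: 'a::polish_space measure)"
proof (induction N)
  case 0
  then show ?case by simp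
next
  case (Suc N)
  have o: "open {w::'a. dist w (c N) < d}" by (intro open_Collect_less continuous_intros)
  have "(\<lambda>w. if w \<in> {w. dist w (c N) < d} then c N else Tq c d N w) \<in> borel_measurable borel"
    by (rule measurable_If_set) (use Suc o in auto)
  then show ?case by (simp add: fun_eq_iff)
qed

lemma approx_fin:
  fixes \<mu> :: "'a::polish_space measure"
  assumes \<mu>: "\<mu> \<in> W1" and e: "\<epsilon> > 0"
  shows "\<exists>\<eta> S. fsupp \<eta> S \<and> W1_dist \<mu> \<eta> \<le> ennreal \<epsilon>"
proof -
  have s: "sets \<mu> = sets borel" and ps: "prob_space \<mu>" and sp: "space \<mu> = UNIV" using W1_D[OF \<mu>] by auto
  interpret prob_space \<mu> by (rule ps)
  obtain c :: "nat \<Rightarrow> 'a" where c: "\<And>x e. e > 0 \<Longrightarrow> \<exists>k. dist x (c k) < e"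
    using countable_dense_seq by blast
  define d where "d = \<epsilon> / 2"
  have d0: "d > 0" using e unfolding d_def by simp
  define V where "V N = {w. \<exists>k<N. dist w (c k) < d}" for N
  have Vo: "open (V N)" for N
  proof -
    have "V N = (\<Union>k<N. ball (c k) d)" unfolding V_def by (auto simp: dist_commute)
    then show ?thesis by auto
  qed
  define s where "s N w = indicator (-V N) w * dist w (c 0)" for N w
  have sm: "s N \<in> borel_measurable \<mu>" for N
    unfolding s_def using Vo[of N] by (intro meas_cong_borel[OF \<open>sets \<mu> = sets borel\<close>]) measurable
  have iw: "integrable \<mu> (\<lambda>w. dist w (c 0))" using W1_int[OF \<mu>] by simp
  have lim: "(\<lambda>N. \<integral>w. s N w \<partial>\<mu>) \<longlonglongrightarrow> (\<integral>w. 0 \<partial>\<mu>)"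
  proof (rule integral_dominated_convergence[OF _ sm iw])
    show "(\<lambda>w. 0::real) \<in> borel_measurable \<mu>" by simp
    show "AE w in \<mu>. (\<lambda>N. s N w) \<longlonglongrightarrow> 0"
    proof (rule AE_I2)
      fix w
      obtain k where k: "dist w (c k) < d" using c[OF d0] by blast
      have "eventually (\<lambda>N. s N w = 0) sequentially"
        unfolding eventually_sequentially
      proof (rule exI[of _ "Suc k"], intro allI impI)
        fix n assume "Suc k \<le> n"
        then have "k < n" by simp
        then have "w \<in> V n" using k unfolding V_def by blast
        then show "s n w = 0" unfolding s_def by simp
      qed
      then show "(\<lambda>N. s N w) \<longlonglongrightarrow> 0" by (rule tendsto_eventually)
    qed
    show "AE w in \<mu>. norm (s N w) \<le> dist w (c 0)" for N
      by (rule AE_I2) (auto simp: s_def indicator_def)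
  qed
  then have "(\<lambda>N. \<integral>w. s N w \<partial>\<mu>) \<longlonglongrightarrow> 0" by simp
  then have "eventually (\<lambda>N. (\<integral>w. s N w \<partial>\<mu>) < d) sequentially" using d0 by (rule order_tendstoD(2))
  then obtain N where N: "(\<integral>w. s N w \<partial>\<mu>) < d" by (auto simp: eventually_sequentially)
  define T where "T = Tq c d N"
  have Tm: "T \<in> borel_measurable borel" unfolding T_def by (rule Tq_meas)
  have TmE: "T \<in> measurable \<mu> borel" by (rule meas_cong_borel[OF s Tm])
  define \<eta> where "\<eta> = distr \<mu> borel T"
  define C where "C = Max ((\<lambda>k. dist (c k) (c 0)) ` {..N})"
  have TC: "dist (T w) (c 0) \<le> dist w (c 0) + C" for w
  proof -
    obtain k where "k \<le> N" "T w = c k" using Tq_range[of c d N w] unfolding T_def by auto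
    then have "dist (T w) (c 0) \<le> C" unfolding C_def by (intro Max_ge) auto
    moreover have "0 \<le> dist w (c 0)" by simp
    ultimately show ?thesis by linarith
  qed
  have \<eta>W: "\<eta> \<in> W1" unfolding \<eta>_def by (rule W1_distr[OF \<mu> Tm TC])
  have iS: "integrable \<mu> (s N)"
    by (rule Bochner_Integration.integrable_bound[OF iw sm]) (auto simp: s_def indicator_def)
  have "W1_dist \<mu> \<eta> \<le> (\<integral>\<^sup>+w. ennreal (dist w (T w)) \<partial>\<mu>)"
    using W1_dist_le[OF map_coupling(1)[OF \<mu> Tm]] map_coupling(2)[OF \<mu> Tm] unfolding \<eta>_def by simp
  also have "\<dots> \<le> (\<integral>\<^sup>+w. ennreal d + ennreal (s N w) \<partial>\<mu>)"
  proof (rule nn_integral_mono)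
    fix w
    show "ennreal (dist w (T w)) \<le> ennreal d + ennreal (s N w)"
    proof (cases "\<exists>k<N. dist w (c k) < d")
      case True
      then have "dist w (T w) < d" unfolding T_def by (rule Tq_close)
      then show ?thesis by (simp add: ennreal_leI add_increasing2)
    next
      case False
      then have "T w = c 0" "s N w = dist w (c 0)" unfolding T_def s_def V_def by (auto simp: Tq_far)
      then show ?thesis by (simp add: add_increasing)
    qed
  qed
  also have "\<dots> = ennreal d + (\<integral>\<^sup>+w. ennreal (s N w) \<partial>\<mu>)"
    using sm emeasure_space_1 by (simp add: nn_integral_add)
  also have "(\<integral>\<^sup>+w. ennreal (s N w) \<partial>\<mu>) = ennreal (\<integral>w. s N w \<partial>\<mu>)"
    by (rule nn_integral_eq_integral[OF iS]) (auto simp: s_def)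
  also have "ennreal d + ennreal (\<integral>w. s N w \<partial>\<mu>) \<le> ennreal \<epsilon>"
  proof -
    have "0 \<le> (\<integral>w. s N w \<partial>\<mu>)" unfolding s_def by (intro Bochner_Integration.integral_nonneg) simp
    then have "ennreal d + ennreal (\<integral>w. s N w \<partial>\<mu>) = ennreal (d + (\<integral>w. s N w \<partial>\<mu>))"
      using d0 by (simp add: ennreal_plus)
    also have "\<dots> \<le> ennreal \<epsilon>" using N unfolding d_def by (intro ennreal_leI) simp
    finally show ?thesis .
  qed
  finally have dist_le: "W1_dist \<mu> \<eta> \<le> ennreal \<epsilon>" .
  define F where "F = c ` {..N}"
  define S where "S = {y \<in> F. emeasure \<eta> {y} > 0}"
  have fF: "finite F" unfolding F_def by simp
  have fS: "finite S" unfolding S_def using fF by simp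
  have \<eta>e: "emeasure \<eta> B = emeasure \<mu> (T -` B)" if "B \<in> sets borel" for B
    unfolding \<eta>_def using emeasure_distr[OF TmE that] sp by simp
  have s\<eta>: "sets \<eta> = sets borel" unfolding \<eta>_def by simp
  have cF: "-F \<in> sets borel" using fF by (simp add: borel_closed finite_imp_closed)
  have "T -` (-F) = {}" using Tq_range unfolding T_def F_def by auto
  then have F0: "emeasure \<eta> (-F) = 0" using \<eta>e[OF cF] by simp
  have FS: "F - S \<in> sets borel" using fF by (simp add: borel_closed finite_imp_closed)
  have "emeasure \<eta> (F - S) = (\<Sum>y\<in>F - S. emeasure \<eta> {y})"
    by (rule emeasure_eq_sum_singleton) (use fF s\<eta> in auto)
  also have "\<dots> = 0" unfolding S_def by (intro sum.neutral) auto
  finally have FS0: "emeasure \<eta> (F - S) = 0" .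
  have "emeasure \<eta> (-S) \<le> emeasure \<eta> (-F \<union> (F - S))"
    by (rule emeasure_mono) (use cF FS s\<eta> in auto)
  also have "\<dots> \<le> emeasure \<eta> (-F) + emeasure \<eta> (F - S)"
    by (rule emeasure_subadditive) (use cF FS s\<eta> in auto)
  finally have S0: "emeasure \<eta> (-S) = 0" using F0 FS0 by simp
  have "fsupp \<eta> S" unfolding fsupp_def using \<eta>W fS S0 by (auto simp: S_def)
  then show ?thesis using dist_le by blast
qed

context wiso
begin

lemma lip_half:
  assumes \<mu>: "\<mu> \<in> W1" and lip: "\<And>x y. \<bar>f x - f y\<bar> \<le> dist x y"
  shows "(\<integral>x. f x \<partial>\<Phi> \<mu>) - (\<integral>x. f x \<partial>distr \<mu> borel psi) \<le> 0"
proof -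
  have fm: "f \<in> borel_measurable borel" by (rule lip_meas[OF lip])
  have lip2: "\<bar>f (psi x) - f (psi y)\<bar> \<le> dist x y" for x y using lip[of "psi x" "psi y"] by (simp add: psi_dist)
  have s: "sets \<mu> = sets borel" using W1_D[OF \<mu>] by simp
  have pm: "psi \<in> measurable \<mu> borel" by (rule meas_cong_borel[OF s psi_meas])
  have bound: "(\<integral>x. f x \<partial>\<Phi> \<mu>) - (\<integral>x. f x \<partial>distr \<mu> borel psi) \<le> 2 * e" if e: "e > 0" for e
  proof -
    obtain \<eta> S where \<eta>: "fsupp \<eta> S" and d: "W1_dist \<mu> \<eta> \<le> ennreal e" using approx_fin[OF \<mu> e] by blast
    have \<eta>W: "\<eta> \<in> W1" using \<eta> unfolding fsupp_def by simp
    have sE: "sets \<eta> = sets borel" using W1_D[OF \<eta>W] by simp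
    have pmE: "psi \<in> measurable \<eta> borel" by (rule meas_cong_borel[OF sE psi_meas])
    have Peq: "\<Phi> \<eta> = distr \<eta> borel psi" by (rule fin_main[OF \<eta>])
    have "ennreal ((\<integral>x. f x \<partial>\<Phi> \<mu>) - (\<integral>x. f x \<partial>\<Phi> \<eta>)) \<le> W1_dist (\<Phi> \<mu>) (\<Phi> \<eta>)"
      by (rule W1_lip[OF Phi_W1[OF \<mu>] Phi_W1[OF \<eta>W] lip])
    also have "\<dots> = W1_dist \<mu> \<eta>" by (rule Phi_dist[OF \<mu> \<eta>W])
    also have "\<dots> \<le> ennreal e" by (rule d)
    finally have a: "(\<integral>x. f x \<partial>\<Phi> \<mu>) - (\<integral>x. f x \<partial>\<Phi> \<eta>) \<le> e" using e by (simp add: ennreal_le_iff)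
    have "ennreal ((\<integral>x. f (psi x) \<partial>\<eta>) - (\<integral>x. f (psi x) \<partial>\<mu>)) \<le> W1_dist \<eta> \<mu>"
      by (rule W1_lip[OF \<eta>W \<mu> lip2])
    also have "\<dots> = W1_dist \<mu> \<eta>" by (rule W1_dist_sym)
    also have "\<dots> \<le> ennreal e" by (rule d)
    finally have b: "(\<integral>x. f (psi x) \<partial>\<eta>) - (\<integral>x. f (psi x) \<partial>\<mu>) \<le> e" using e by (simp add: ennreal_le_iff)
    have c1: "(\<integral>x. f x \<partial>\<Phi> \<eta>) = (\<integral>x. f (psi x) \<partial>\<eta>)"
      unfolding Peq by (rule integral_distr[OF pmE fm])
    have c2: "(\<integral>x. f x \<partial>distr \<mu> borel psi) = (\<integral>x. f (psi x) \<partial>\<mu>)"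
      by (rule integral_distr[OF pm fm])
    show ?thesis using a b c1 c2 by linarith
  qed
  show ?thesis
  proof (rule ccontr)
    assume "\<not> ?thesis"
    then have pos: "(\<integral>x. f x \<partial>\<Phi> \<mu>) - (\<integral>x. f x \<partial>distr \<mu> borel psi) > 0" by simp
    have "(\<integral>x. f x \<partial>\<Phi> \<mu>) - (\<integral>x. f x \<partial>distr \<mu> borel psi) \<le> 2 * (((\<integral>x. f x \<partial>\<Phi> \<mu>) - (\<integral>x. f x \<partial>distr \<mu> borel psi)) / 4)"
      by (rule bound) (use pos in simp)
    then show False using pos by simp
  qed
qed

lemma lip_eq:
  assumes \<mu>: "\<mu> \<in> W1" and lip: "\<And>x y. \<bar>f x - f y\<bar> \<le> dist x y"
  shows "(\<integral>x. f x \<partial>\<Phi> \<mu>) = (\<integral>x. f x \<partial>distr \<mu> borel psi)"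
proof -
  have lipm: "\<bar>(- f x) - (- f y)\<bar> \<le> dist x y" for x y using lip[of x y] by simp
  have "(\<integral>x. f x \<partial>\<Phi> \<mu>) - (\<integral>x. f x \<partial>distr \<mu> borel psi) \<le> 0" by (rule lip_half[OF \<mu> lip])
  moreover have "(\<integral>x. - f x \<partial>\<Phi> \<mu>) - (\<integral>x. - f x \<partial>distr \<mu> borel psi) \<le> 0" by (rule lip_half[OF \<mu> lipm])
  ultimately show ?thesis by simp
qed

lemma Phi_eq:
  assumes \<mu>: "\<mu> \<in> W1"
  shows "\<Phi> \<mu> = distr \<mu> borel psi"
proof -
  let ?M1 = "\<Phi> \<mu>" and ?M2 = "distr \<mu> borel psi"
  have W1: "?M1 \<in> W1" and W2: "?M2 \<in> W1" using Phi_W1[OF \<mu>] Psi_W1[OF \<mu>] by auto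
  have s1: "sets ?M1 = sets borel" and p1: "prob_space ?M1" and sp1: "space ?M1 = UNIV" using W1_D[OF W1] by auto
  have s2: "sets ?M2 = sets borel" and p2: "prob_space ?M2" and sp2: "space ?M2 = UNIV" using W1_D[OF W2] by auto
  interpret P1: prob_space ?M1 by (rule p1)
  interpret P2: prob_space ?M2 by (rule p2)
  have open_eq: "emeasure ?M1 U = emeasure ?M2 U" if U: "open U" for U
  proof (cases "U = UNIV")
    case True
    then show ?thesis using P1.emeasure_space_1 P2.emeasure_space_1 sp1 sp2 by simp
  next
    case False
    define F where "F = -U"
    have Fc: "closed F" and Fne: "F \<noteq> {}" using U False unfolding F_def by auto
    define f where "f n x = min 1 (real (Suc n) * infdist x F)" for n x
    have idl: "\<bar>infdist x F - infdist y F\<bar> \<le> dist x y" for x y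
      using infdist_triangle[of x F y] infdist_triangle[of y F x] by (simp add: dist_commute abs_le_iff)
    have lipn: "\<bar>f n x / real (Suc n) - f n y / real (Suc n)\<bar> \<le> dist x y" for n x y
    proof -
      have eq: "f n z / real (Suc n) = min (1 / real (Suc n)) (infdist z F)" for z
        unfolding f_def by (simp add: min_def field_simps)
      have "\<bar>min (1 / real (Suc n)) (infdist x F) - min (1 / real (Suc n)) (infdist y F)\<bar> \<le> \<bar>infdist x F - infdist y F\<bar>"
        by (auto simp: min_def abs_if)
      then show ?thesis using idl[of x y] eq by simp
    qed
    have fmeas: "f n \<in> borel_measurable borel" for n
    proof -
      have "(\<lambda>x. f n x / real (Suc n)) \<in> borel_measurable borel" by (rule lip_meas[OF lipn])
      then have "(\<lambda>x. real (Suc n) * (f n x / real (Suc n))) \<in> borel_measurable borel" by measurable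
      then show ?thesis by simp
    qed
    have ieq: "(\<integral>x. f n x \<partial>?M1) = (\<integral>x. f n x \<partial>?M2)" for n
    proof -
      have "(\<integral>x. f n x / real (Suc n) \<partial>?M1) = (\<integral>x. f n x / real (Suc n) \<partial>?M2)"
        by (rule lip_eq[OF \<mu> lipn])
      then show ?thesis by simp
    qed
    have conv: "(\<lambda>n. f n x) \<longlonglongrightarrow> indicator U x" for x
    proof (cases "x \<in> U")
      case True
      then have "x \<notin> F" unfolding F_def by simp
      then have dpos: "infdist x F > 0" using in_closed_iff_infdist_zero[OF Fc Fne, of x] infdist_nonneg[of x F] by simp
      obtain k where k: "inverse (real (Suc k)) < infdist x F" using reals_Archimedean[OF dpos] by blast
      have "eventually (\<lambda>n. f n x = indicator U x) sequentially"
        unfolding eventually_sequentially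
      proof (rule exI[of _ k], intro allI impI)
        fix n assume "k \<le> n"
        have "1 < real (Suc k) * infdist x F" using k dpos by (simp add: field_simps)
        moreover have "real (Suc k) * infdist x F \<le> real (Suc n) * infdist x F"
          using \<open>k \<le> n\<close> dpos by (intro mult_right_mono) auto
        ultimately have "1 \<le> real (Suc n) * infdist x F" by simp
        then show "f n x = indicator U x" using True unfolding f_def by simp
      qed
      then show ?thesis by (rule tendsto_eventually)
    next
      case False
      then have "x \<in> F" unfolding F_def by simp
      then have "infdist x F = 0" using in_closed_iff_infdist_zero[OF Fc Fne] by simp
      then have "f n x = indicator U x" for n using False unfolding f_def by simp
      then show ?thesis by simp
    qed
    have lim: "(\<lambda>n. \<integral>x. f n x \<partial>M) \<longlonglongrightarrow> (\<integral>x. indicator U x \<partial>M)" if pM: "prob_space M" and sM: "sets M = sets borel" for M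
    proof (rule integral_dominated_convergence[where w="\<lambda>_. 1"])
      interpret prob_space M by (rule pM)
      show "(indicator U :: 'a \<Rightarrow> real) \<in> borel_measurable M" using U by (intro meas_cong_borel[OF sM] borel_measurable_indicator) (simp add: borel_open)
      show "f n \<in> borel_measurable M" for n by (rule meas_cong_borel[OF sM fmeas])
      show "integrable M (\<lambda>_. 1::real)" by simp
      show "AE x in M. (\<lambda>n. f n x) \<longlonglongrightarrow> indicator U x" by (rule AE_I2) (rule conv)
      show "AE x in M. norm (f n x) \<le> 1" for n by (rule AE_I2) (simp add: f_def infdist_nonneg)
    qed
    have l1: "(\<lambda>n. \<integral>x. f n x \<partial>?M2) \<longlonglongrightarrow> (\<integral>x. indicator U x \<partial>?M1)"
      using lim[OF p1 s1] unfolding ieq .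
    have "(\<integral>x. indicator U x \<partial>?M1) = (\<integral>x. (indicator U x :: real) \<partial>?M2)"
      by (rule LIMSEQ_unique[OF l1 lim[OF p2 s2]])
    then have "measure ?M1 U = measure ?M2 U" using sp1 sp2 by simp
    then show ?thesis by (simp add: P1.emeasure_eq_measure P2.emeasure_eq_measure)
  qed
  show ?thesis
  proof (rule measure_eqI_generator_eq[where E="{U. open U}" and \<Omega>=UNIV and A="\<lambda>_. UNIV"])
    show "Int_stable {U::'a set. open U}" by (auto simp: Int_stable_def)
    show "{U::'a set. open U} \<subseteq> Pow UNIV" by simp
    show "\<And>X. X \<in> {U. open U} \<Longrightarrow> emeasure ?M1 X = emeasure ?M2 X" using open_eq by simp
    show "sets ?M1 = sigma_sets UNIV {U. open U}" using s1 by (simp add: sets_borel)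
    show "sets ?M2 = sigma_sets UNIV {U. open U}" using s2 by (simp add: sets_borel)
    show "range (\<lambda>_. UNIV) \<subseteq> {U::'a set. open U}" by auto
    show "(\<Union>i::nat. UNIV) = (UNIV::'a set)" by simp
    show "\<And>i::nat. emeasure ?M1 UNIV \<noteq> \<infinity>" using P1.emeasure_space_1 sp1 by simp
  qed
qed

end

theorem theorem4p6:
  fixes \<Phi> :: "('a::polish_space) measure \<Rightarrow> 'a measure"
  assumes strict_tri: "\<And>x y z::'a. z \<noteq> x \<Longrightarrow> z \<noteq> y \<Longrightarrow> dist x y < dist x z + dist z y"
    and iso: "W1_isometry \<Phi>"
  shows "\<exists>\<psi>::'a \<Rightarrow> 'a. isometry \<psi> \<and> (\<forall>\<mu>\<in>W1. \<Phi> \<mu> = distr \<mu> borel \<psi>)"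
proof -
  interpret wiso \<Phi> by (rule wiso.intro[OF strict_tri iso])
  show ?thesis using psi_isometry Phi_eq by blast
qed

end
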